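(* Let $\mathbf{L}\in\{\mathbf{K}_D,\mathbf{KD}_D,\mathbf{KT}_D\}$. Let $\alpha$ be a formula, let $Q\subseteq \mathsf{V}(\alpha)$ be a finite set of propositional variables and $B\subseteq \mathsf{Agt}(\alpha)$ a finite set of agent symbols. (Pre-interpolant.) There exists a formula $I_{pre}$ such that: (1) no variable of $Q$ and no agent of $B$ occurs in $I_{pre}$, i.e. $\mathsf{V}(I_{pre})\cap Q=\emptyset$ and $\mathsf{Agt}(I_{pre})\cap B=\emptyset$; (2) $I_{pre}\Rightarrow\alpha$ is derivable in $\mathsf{G}(\mathbf{L})$; (3) for every formula $\beta$ with $\mathsf{V}(\beta)\cap Q=\emptyset$ and $\mathsf{Agt}(\beta)\cap B=\emptyset$, if $\beta\Rightarrow\alpha$ is derivable in $\mathsf{G}(\mathbf{L})$ then $\beta\Rightarrow I_{pre}$ is derivable in $\mathsf{G}(\mathbf{L})$. (Post-interpolant.) There exists a formula $I_{post}$ such that: (1) $\mathsf{V}(I_{post})\cap Q=\emptyset$ and $\mathsf{Agt}(I_{post})\cap B=\emptyset$; (2) $\alpha\Rightarrow I_{post}$ is derivable in $\mathsf{G}(\mathbf{L})$; (3) for every formula $\beta$ with $\mathsf{V}(\beta)\cap Q=\emptyset$ and $\mathsf{Agt}(\beta)\cap B=\emptyset$, if $\alpha\Rightarrow\beta$ is derivable in $\mathsf{G}(\mathbf{L})$ then $I_{post}\Rightarrow\beta$ is derivable in $\mathsf{G}(\mathbf{L})$.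
   Context: Language: fix a finite nonempty set $\mathsf{Agt}$ of agent symbols and a countable set $\mathsf{Prop}$ of propositional variables; $\mathsf{Grp}$ is the set of nonempty subsets of $\mathsf{Agt}$. Formulas: $\alpha::=p\mid\bot\mid\alpha\wedge\alpha\mid\alpha\vee\alpha\mid\alpha\rightarrow\alpha\mid\neg\alpha\mid D_G\alpha$ with $p\in\mathsf{Prop}$, $G\in\mathsf{Grp}$ ($D_G$ is distributed knowledge of group $G$). $\mathsf{V}(\alpha)$ is the set of propositional variables occurring in $\alpha$; $\mathsf{Agt}(\alpha)$ is the set of agent symbols occurring in $\alpha$ (the union of all $G$ with $D_G$ occurring in $\alpha$); for multisets these are unions. An outmost-boxed formula is one of the form $D_G\gamma$. Sequent calculi: a sequent $\Gamma\Rightarrow\Delta$ is a pair of finite multisets of formulas. $\mathsf{G}(\mathbf{K}_D)$ has initial sequents $\Gamma,p\Rightarrow p,\Delta$ ($p\in\mathsf{Prop}$) and $\bot,\Gamma\Rightarrow\Delta$; the propositional rules: $(R\wedge)$ from $\Gamma\Rightarrow\Delta,\alpha_1$ and $\Gamma\Rightarrow\Delta,\alpha_2$ infer $\Gamma\Rightarrow\Delta,\alpha_1\wedge\alpha_2$; $(L\wedge)$ from $\alpha_1,\alpha_2,\Gamma\Rightarrow\Delta$ infer $\alpha_1\wedge\alpha_2,\Gamma\Rightarrow\Delta$; $(R\vee)$ from $\Gamma\Rightarrow\Delta,\alpha_1,\alpha_2$ infer $\Gamma\Rightarrow\Delta,\alpha_1\vee\alpha_2$; $(L\vee)$ from $\alpha_1,\Gamma\Rightarrow\Delta$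 and $\alpha_2,\Gamma\Rightarrow\Delta$ infer $\alpha_1\vee\alpha_2,\Gamma\Rightarrow\Delta$; $(R\rightarrow)$ from $\alpha_1,\Gamma\Rightarrow\Delta,\alpha_2$ infer $\Gamma\Rightarrow\Delta,\alpha_1\rightarrow\alpha_2$; $(L\rightarrow)$ from $\Gamma\Rightarrow\Delta,\alpha_1$ and $\alpha_2,\Gamma\Rightarrow\Delta$ infer $\alpha_1\rightarrow\alpha_2,\Gamma\Rightarrow\Delta$; $(R\neg)$ from $\alpha,\Gamma\Rightarrow\Delta$ infer $\Gamma\Rightarrow\Delta,\neg\alpha$; $(L\neg)$ from $\Gamma\Rightarrow\Delta,\alpha$ infer $\neg\alpha,\Gamma\Rightarrow\Delta$; and the modal rule $(D_K)$: from $\alpha_1,\dots,\alpha_n\Rightarrow\beta$ ($n\ge 0$) infer $\Sigma,D_{G_1}\alpha_1,\dots,D_{G_n}\alpha_n\Rightarrow D_G\beta,\Omega$, provided $G_i\subseteq G$ for all $i$, $\Sigma$ consists only of propositional variables, $\bot$, and formulas $D_H\gamma$ with $H\not\subseteq G$, and $\Omega$ consists only of propositional variables, $\bot$ and outmost-boxed formulas. $\mathsf{G}(\mathbf{KD}_D)$ adds $(D_D)$: from $\Gamma\Rightarrow$ (empty succedent) with $\Gamma$ nonempty infer $\Sigma,D_{\{a\}}\Gamma\Rightarrow\Omega$ (where $a\in\mathsf{Agt}$, $D_{\{a\}}\Gamma=\{D_{\{a\}}\gamma:\gamma\in\Gamma\}$), provided $\Sigma$ consists only of propositional variables, $\bot$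 and formulas $D_H\gamma$ with $H\neq\{a\}$, and $\Omega$ only of propositional variables, $\bot$ and outmost-boxed formulas. $\mathsf{G}(\mathbf{KT}_D)$ adds to $\mathsf{G}(\mathbf{K}_D)$ the rule $(D_T)$: from $D_G\alpha,\alpha,\Gamma\Rightarrow\Delta$ infer $D_G\alpha,\Gamma\Rightarrow\Delta$. A sequent is derivable if it is the root of a finite tree built from initial sequents by these rules. *)

theory Defs
  imports Main "HOL-Library.Multiset" "HOL-Library.Countable"
begin

text \<open>Agents: a finite (nonempty, as every type) type 'agt. Propositional variables:
a countable type 'p. Groups are nonempty sets of agents; well-formedness of formulas
(all groups nonempty) is expressed by the predicate wf_fm.\<close>

datatype ('p, 'agt) fm =
    Atom 'p
  | Bot
  | Conj "('p, 'agt) fm" "('p, 'agt) fm"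
  | Disj "('p, 'agt) fm" "('p, 'agt) fm"
  | Imp "('p, 'agt) fm" "('p, 'agt) fm"
  | Neg "('p, 'agt) fm"
  | Dk "'agt set" "('p, 'agt) fm"

fun wf_fm :: "('p, 'agt) fm \<Rightarrow> bool" where
  "wf_fm (Atom p) = True"
| "wf_fm Bot = True"
| "wf_fm (Conj a b) = (wf_fm a \<and> wf_fm b)"
| "wf_fm (Disj a b) = (wf_fm a \<and> wf_fm b)"
| "wf_fm (Imp a b) = (wf_fm a \<and> wf_fm b)"
| "wf_fm (Neg a) = wf_fm a"
| "wf_fm (Dk G a) = (G \<noteq> {} \<and> wf_fm a)"

fun vars :: "('p, 'agt) fm \<Rightarrow> 'p set" where
  "vars (Atom p) = {p}"
| "vars Bot = {}"
| "vars (Conj a b) = vars a \<union> vars b"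
| "vars (Disj a b) = vars a \<union> vars b"
| "vars (Imp a b) = vars a \<union> vars b"
| "vars (Neg a) = vars a"
| "vars (Dk G a) = vars a"

fun agts :: "('p, 'agt) fm \<Rightarrow> 'agt set" where
  "agts (Atom p) = {}"
| "agts Bot = {}"
| "agts (Conj a b) = agts a \<union> agts b"
| "agts (Disj a b) = agts a \<union> agts b"
| "agts (Imp a b) = agts a \<union> agts b"
| "agts (Neg a) = agts a"
| "agts (Dk G a) = G \<union> agts a"

fun omega_ok :: "('p, 'agt) fm \<Rightarrow> bool" where
  "omega_ok (Atom p) = True"
| "omega_ok Bot = True"
| "omega_ok (Dk H g) = True"
| "omega_ok _ = False"

fun sigmaK_ok :: "'agt set \<Rightarrow> ('p, 'agt) fm \<Rightarrow> bool" where
  "sigmaK_ok G (Atom p) = True"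
| "sigmaK_ok G Bot = True"
| "sigmaK_ok G (Dk H g) = (\<not> H \<subseteq> G)"
| "sigmaK_ok G _ = False"

fun sigmaD_ok :: "'agt \<Rightarrow> ('p, 'agt) fm \<Rightarrow> bool" where
  "sigmaD_ok a (Atom p) = True"
| "sigmaD_ok a Bot = True"
| "sigmaD_ok a (Dk H g) = (H \<noteq> {a})"
| "sigmaD_ok a _ = False"

datatype logic = LK | LKD | LKT

inductive derivable :: "logic \<Rightarrow> ('p, 'agt) fm multiset \<Rightarrow> ('p, 'agt) fm multiset \<Rightarrow> bool"
  for L :: logic where
  init: "derivable L (add_mset (Atom p) \<Gamma>) (add_mset (Atom p) \<Delta>)"
| botL: "derivable L (add_mset Bot \<Gamma>) \<Delta>"
| conjR: "derivable L \<Gamma> (add_mset a1 \<Delta>) \<Longrightarrow> derivable L \<Gamma> (add_mset a2 \<Delta>) \<Longrightarrow>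
          derivable L \<Gamma> (add_mset (Conj a1 a2) \<Delta>)"
| conjL: "derivable L (add_mset a1 (add_mset a2 \<Gamma>)) \<Delta> \<Longrightarrow>
          derivable L (add_mset (Conj a1 a2) \<Gamma>) \<Delta>"
| disjR: "derivable L \<Gamma> (add_mset a1 (add_mset a2 \<Delta>)) \<Longrightarrow>
          derivable L \<Gamma> (add_mset (Disj a1 a2) \<Delta>)"
| disjL: "derivable L (add_mset a1 \<Gamma>) \<Delta> \<Longrightarrow> derivable L (add_mset a2 \<Gamma>) \<Delta> \<Longrightarrow>
          derivable L (add_mset (Disj a1 a2) \<Gamma>) \<Delta>"
| impR: "derivable L (add_mset a1 \<Gamma>) (add_mset a2 \<Delta>) \<Longrightarrow>
         derivable L \<Gamma> (add_mset (Imp a1 a2) \<Delta>)"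
| impL: "derivable L \<Gamma> (add_mset a1 \<Delta>) \<Longrightarrow> derivable L (add_mset a2 \<Gamma>) \<Delta> \<Longrightarrow>
         derivable L (add_mset (Imp a1 a2) \<Gamma>) \<Delta>"
| negR: "derivable L (add_mset a \<Gamma>) \<Delta> \<Longrightarrow> derivable L \<Gamma> (add_mset (Neg a) \<Delta>)"
| negL: "derivable L \<Gamma> (add_mset a \<Delta>) \<Longrightarrow> derivable L (add_mset (Neg a) \<Gamma>) \<Delta>"
| DK: "derivable L (image_mset snd X) {#b#} \<Longrightarrow>
       (\<forall>x\<in>#X. fst x \<subseteq> G) \<Longrightarrow>
       (\<forall>s\<in>#\<Sigma>. sigmaK_ok G s) \<Longrightarrow> (\<forall>w\<in>#\<Omega>. omega_ok w) \<Longrightarrow>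
       derivable L (\<Sigma> + image_mset (\<lambda>x. Dk (fst x) (snd x)) X) (add_mset (Dk G b) \<Omega>)"
| DD: "L = LKD \<Longrightarrow> derivable L \<Gamma> {#} \<Longrightarrow> \<Gamma> \<noteq> {#} \<Longrightarrow>
       (\<forall>s\<in>#\<Sigma>. sigmaD_ok a s) \<Longrightarrow> (\<forall>w\<in>#\<Omega>. omega_ok w) \<Longrightarrow>
       derivable L (\<Sigma> + image_mset (Dk {a}) \<Gamma>) \<Omega>"
| DT: "L = LKT \<Longrightarrow> derivable L (add_mset (Dk G a) (add_mset a \<Gamma>)) \<Delta> \<Longrightarrow>
       derivable L (add_mset (Dk G a) \<Gamma>) \<Delta>"

end

theory Submission
  imports Defs "HOL-Library.FuncSet"
begin

fun sat :: "('w \<Rightarrow> 'p \<Rightarrow> bool) \<Rightarrow> ('agt set \<Rightarrow> 'w \<Rightarrow> 'w \<Rightarrow> bool) \<Rightarrow> 'w \<Rightarrow> ('p, 'agt) fm \<Rightarrow> bool" where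
  "sat V R w (Atom p) = V w p"
| "sat V R w Bot = False"
| "sat V R w (Conj a b) = (sat V R w a \<and> sat V R w b)"
| "sat V R w (Disj a b) = (sat V R w a \<or> sat V R w b)"
| "sat V R w (Imp a b) = (sat V R w a \<longrightarrow> sat V R w b)"
| "sat V R w (Neg a) = (\<not> sat V R w a)"
| "sat V R w (Dk G a) = (\<forall>v. R G w v \<longrightarrow> sat V R v a)"

section \<open>Bisimulation\<close>

fun eqv :: "'p set \<Rightarrow> 'agt set set \<Rightarrow> nat \<Rightarrow> ('a \<Rightarrow> 'p \<Rightarrow> bool) \<Rightarrow> ('agt set \<Rightarrow> 'a \<Rightarrow> 'a \<Rightarrow> bool) \<Rightarrow> 'a \<Rightarrow>
    ('b \<Rightarrow> 'p \<Rightarrow> bool) \<Rightarrow> ('agt set \<Rightarrow> 'b \<Rightarrow> 'b \<Rightarrow> bool) \<Rightarrow> 'b \<Rightarrow> bool" where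
  "eqv Vs Gs 0 V1 R1 x V2 R2 y = (\<forall>p\<in>Vs. V1 x p = V2 y p)"
| "eqv Vs Gs (Suc n) V1 R1 x V2 R2 y = ((\<forall>p\<in>Vs. V1 x p = V2 y p) \<and>
     (\<forall>G\<in>Gs. (\<forall>x'. R1 G x x' \<longrightarrow> (\<exists>y'. R2 G y y' \<and> eqv Vs Gs n V1 R1 x' V2 R2 y')) \<and>
              (\<forall>y'. R2 G y y' \<longrightarrow> (\<exists>x'. R1 G x x' \<and> eqv Vs Gs n V1 R1 x' V2 R2 y'))))"

lemma eqv_atoms: "eqv Vs Gs n V1 R1 x V2 R2 y \<Longrightarrow> p \<in> Vs \<Longrightarrow> V1 x p = V2 y p"
  by (cases n) auto

lemma eqv_sym: "eqv Vs Gs n V1 R1 x V2 R2 y \<Longrightarrow> eqv Vs Gs n V2 R2 y V1 R1 x"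
proof (induction n arbitrary: x y)
  case 0 then show ?case by simp
next
  case (Suc n)
  show ?case
  proof (simp only: eqv.simps, intro conjI ballI allI impI)
    fix p assume "p \<in> Vs" then show "V2 y p = V1 x p" using Suc.prems by simp
  next
    fix G y' assume G: "G \<in> Gs" and R: "R2 G y y'"
    have "\<forall>y'. R2 G y y' \<longrightarrow> (\<exists>x'. R1 G x x' \<and> eqv Vs Gs n V1 R1 x' V2 R2 y')" using Suc.prems G by simp
    then obtain x' where "R1 G x x'" "eqv Vs Gs n V1 R1 x' V2 R2 y'" using R by blast
    then show "\<exists>x'. R1 G x x' \<and> eqv Vs Gs n V2 R2 y' V1 R1 x'" using Suc.IH by blast
  next
    fix G x' assume G: "G \<in> Gs" and R: "R1 G x x'"
    have "\<forall>x'. R1 G x x' \<longrightarrow> (\<exists>y'. R2 G y y' \<and> eqv Vs Gs n V1 R1 x' V2 R2 y')" using Suc.prems G by simp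
    then obtain y' where "R2 G y y'" "eqv Vs Gs n V1 R1 x' V2 R2 y'" using R by blast
    then show "\<exists>y'. R2 G y y' \<and> eqv Vs Gs n V2 R2 y' V1 R1 x'" using Suc.IH by blast
  qed
qed

lemma eqv_refl: "eqv Vs Gs n V R x V R x"
proof (induction n arbitrary: x)
  case 0 then show ?case by simp
next
  case (Suc n) then show ?case by auto
qed

fun grps :: "('p, 'agt) fm \<Rightarrow> 'agt set set" where
  "grps (Atom p) = {}"
| "grps Bot = {}"
| "grps (Conj a b) = grps a \<union> grps b"
| "grps (Disj a b) = grps a \<union> grps b"
| "grps (Imp a b) = grps a \<union> grps b"
| "grps (Neg a) = grps a"
| "grps (Dk G a) = insert G (grps a)"

fun dep :: "('p, 'agt) fm \<Rightarrow> nat" where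
  "dep (Atom p) = 0"
| "dep Bot = 0"
| "dep (Conj a b) = max (dep a) (dep b)"
| "dep (Disj a b) = max (dep a) (dep b)"
| "dep (Imp a b) = max (dep a) (dep b)"
| "dep (Neg a) = dep a"
| "dep (Dk G a) = Suc (dep a)"

lemma agts_grps: "agts \<phi> = \<Union> (grps \<phi>)"
  by (induction \<phi>) auto

lemma wf_grps: "wf_fm \<phi> \<Longrightarrow> G \<in> grps \<phi> \<Longrightarrow> G \<noteq> {}"
  by (induction \<phi>) auto

lemma finite_vars: "finite (vars \<phi>)"
  by (induction \<phi>) auto

lemma invariance:
  "eqv Vs Gs n V1 R1 x V2 R2 y \<Longrightarrow> vars \<phi> \<subseteq> Vs \<Longrightarrow> grps \<phi> \<subseteq> Gs \<Longrightarrow> dep \<phi> \<le> n \<Longrightarrow>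
   sat V1 R1 x \<phi> = sat V2 R2 y \<phi>"
proof (induction \<phi> arbitrary: n x y)
  case (Atom p) then show ?case using eqv_atoms by fastforce
next
  case Bot then show ?case by simp
next
  case (Conj a b) then show ?case by simp
next
  case (Disj a b) then show ?case by simp
next
  case (Imp a b) then show ?case by simp
next
  case (Neg a) then show ?case by simp
next
  case (Dk G a)
  obtain m where n: "n = Suc m" and dm: "dep a \<le> m" using Dk.prems(4) by (cases n) auto
  have G: "G \<in> Gs" using Dk.prems(3) by simp
  have e: "eqv Vs Gs (Suc m) V1 R1 x V2 R2 y" using Dk.prems(1) n by simp
  have va: "vars a \<subseteq> Vs" "grps a \<subseteq> Gs" using Dk.prems(2,3) by auto
  show ?case
  proof
    assume s: "sat V1 R1 x (Dk G a)"
    show "sat V2 R2 y (Dk G a)"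
    proof (simp, intro allI impI)
      fix y' assume R: "R2 G y y'"
      have "\<forall>y'. R2 G y y' \<longrightarrow> (\<exists>x'. R1 G x x' \<and> eqv Vs Gs m V1 R1 x' V2 R2 y')" using e G by simp
      then obtain x' where "R1 G x x'" "eqv Vs Gs m V1 R1 x' V2 R2 y'" using R by blast
      then show "sat V2 R2 y' a" using s Dk.IH[OF _ va dm] by auto
    qed
  next
    assume s: "sat V2 R2 y (Dk G a)"
    show "sat V1 R1 x (Dk G a)"
    proof (simp, intro allI impI)
      fix x' assume R: "R1 G x x'"
      have "\<forall>x'. R1 G x x' \<longrightarrow> (\<exists>y'. R2 G y y' \<and> eqv Vs Gs m V1 R1 x' V2 R2 y')" using e G by simp
      then obtain y' where "R2 G y y'" "eqv Vs Gs m V1 R1 x' V2 R2 y'" using R by blast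
      then show "sat V1 R1 x' a" using s Dk.IH[OF _ va dm] by auto
    qed
  qed
qed

section \<open>Characteristic formulas\<close>

definition top :: "('p, 'agt) fm" where "top = Neg Bot"

definition conjs :: "('p, 'agt) fm set \<Rightarrow> ('p, 'agt) fm" where
  "conjs S = foldr Conj (SOME xs. set xs = S) top"

definition disjs :: "('p, 'agt) fm set \<Rightarrow> ('p, 'agt) fm" where
  "disjs S = foldr Disj (SOME xs. set xs = S) Bot"

lemma some_list: "finite S \<Longrightarrow> set (SOME xs. set xs = S) = S"
  by (rule someI_ex) (rule finite_list)

lemma foldr_conj:
  "sat V R w (foldr Conj xs top) = (\<forall>\<phi>\<in>set xs. sat V R w \<phi>)"
  "wf_fm (foldr Conj xs top) = (\<forall>\<phi>\<in>set xs. wf_fm \<phi>)"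
  "vars (foldr Conj xs top) = \<Union> (vars ` set xs)"
  "grps (foldr Conj xs top) = \<Union> (grps ` set xs)"
  by (induction xs) (auto simp: top_def)

lemma foldr_disj:
  "sat V R w (foldr Disj xs Bot) = (\<exists>\<phi>\<in>set xs. sat V R w \<phi>)"
  "wf_fm (foldr Disj xs Bot) = (\<forall>\<phi>\<in>set xs. wf_fm \<phi>)"
  "vars (foldr Disj xs Bot) = \<Union> (vars ` set xs)"
  "grps (foldr Disj xs Bot) = \<Union> (grps ` set xs)"
  by (induction xs) auto

lemma conjs_props:
  assumes "finite S"
  shows "sat V R w (conjs S) = (\<forall>\<phi>\<in>S. sat V R w \<phi>)"
    "wf_fm (conjs S) = (\<forall>\<phi>\<in>S. wf_fm \<phi>)"
    "vars (conjs S) = \<Union> (vars ` S)"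
    "grps (conjs S) = \<Union> (grps ` S)"
  unfolding conjs_def using foldr_conj some_list[OF assms] by metis+

lemma disjs_props:
  assumes "finite S"
  shows "sat V R w (disjs S) = (\<exists>\<phi>\<in>S. sat V R w \<phi>)"
    "wf_fm (disjs S) = (\<forall>\<phi>\<in>S. wf_fm \<phi>)"
    "vars (disjs S) = \<Union> (vars ` S)"
    "grps (disjs S) = \<Union> (grps ` S)"
  unfolding disjs_def using foldr_disj some_list[OF assms] by metis+

definition lits :: "'p set \<Rightarrow> ('p \<Rightarrow> bool) \<Rightarrow> ('p, 'agt) fm" where
  "lits Vs f = conjs ((\<lambda>p. if f p then Atom p else Neg (Atom p)) ` Vs)"

definition mods :: "'agt set \<Rightarrow> ('p, 'agt) fm set \<Rightarrow> ('p, 'agt) fm" where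
  "mods G T = Conj (conjs ((\<lambda>\<phi>. Neg (Dk G (Neg \<phi>))) ` T)) (Dk G (disjs T))"

primrec chi :: "nat \<Rightarrow> 'p set \<Rightarrow> 'agt set set \<Rightarrow> ('a \<Rightarrow> 'p \<Rightarrow> bool) \<Rightarrow> ('agt set \<Rightarrow> 'a \<Rightarrow> 'a \<Rightarrow> bool) \<Rightarrow> 'a \<Rightarrow> ('p, 'agt) fm" where
  "chi 0 Vs Gs V R x = lits Vs (V x)"
| "chi (Suc n) Vs Gs V R x = Conj (lits Vs (V x))
     (conjs ((\<lambda>G. mods G ((\<lambda>x'. chi n Vs Gs V R x') ` {x'. R G x x'})) ` Gs))"

primrec FF :: "nat \<Rightarrow> 'p set \<Rightarrow> 'agt set set \<Rightarrow> ('p, 'agt) fm set" where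
  "FF 0 Vs Gs = (\<lambda>S. lits Vs (\<lambda>p. p \<in> S)) ` Pow Vs"
| "FF (Suc n) Vs Gs = (\<lambda>(S, TT). Conj (lits Vs (\<lambda>p. p \<in> S)) (conjs ((\<lambda>G. mods G (TT G)) ` Gs))) `
      (Pow Vs \<times> (PiE Gs (\<lambda>_. Pow (FF n Vs Gs))))"

lemma finite_FF: "finite Vs \<Longrightarrow> finite Gs \<Longrightarrow> finite (FF n Vs Gs)"
  by (induction n) (auto intro!: finite_PiE)

lemma lits_eq: "lits Vs f = lits Vs (\<lambda>p. p \<in> {p \<in> Vs. f p})"
  unfolding lits_def by (rule arg_cong[where f = conjs]) (rule image_cong, auto)

lemma chi_FF: "chi n Vs Gs V R x \<in> FF n Vs Gs"
proof (induction n arbitrary: x)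
  case 0
  show ?case by (simp add: image_iff) (rule bexI[of _ "{p \<in> Vs. V x p}"], rule lits_eq, auto)
next
  case (Suc n)
  define T where "T = restrict (\<lambda>G. (\<lambda>x'. chi n Vs Gs V R x') ` {x'. R G x x'}) Gs"
  have T: "T \<in> PiE Gs (\<lambda>_. Pow (FF n Vs Gs))" unfolding T_def using Suc.IH by auto
  have e: "(\<lambda>G. mods G ((\<lambda>x'. chi n Vs Gs V R x') ` {x'. R G x x'})) ` Gs = (\<lambda>G. mods G (T G)) ` Gs"
    unfolding T_def by (rule image_cong) auto
  have c: "chi (Suc n) Vs Gs V R x = (\<lambda>(S, TT). Conj (lits Vs (\<lambda>p. p \<in> S)) (conjs ((\<lambda>G. mods G (TT G)) ` Gs))) ({p \<in> Vs. V x p}, T)"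
    using e lits_eq[of Vs "V x"] by simp
  have m: "({p \<in> Vs. V x p}, T) \<in> Pow Vs \<times> (PiE Gs (\<lambda>_. Pow (FF n Vs Gs)))" using T by auto
  show ?case unfolding FF.simps
    by (rule image_eqI[where f="\<lambda>(S, TT). Conj (lits Vs (\<lambda>p. p \<in> S)) (conjs ((\<lambda>G. mods G (TT G)) ` Gs))", OF c m])
qed

lemma finite_chi_set:
  assumes "finite Vs" "finite Gs"
  shows "finite ((\<lambda>x'. chi n Vs Gs V R x') ` X)"
  by (rule finite_subset[OF _ finite_FF[OF assms, of n]]) (auto intro: chi_FF)

lemma sat_lits:
  assumes "finite Vs"
  shows "sat V2 R2 y (lits Vs f) = (\<forall>p\<in>Vs. f p = V2 y p)"
proof -
  have "sat V2 R2 y (lits Vs f) = (\<forall>\<phi>\<in>(\<lambda>p. if f p then Atom p else Neg (Atom p)) ` Vs. sat V2 R2 y \<phi>)"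
    unfolding lits_def by (rule conjs_props(1)[OF finite_imageI[OF assms]])
  also have "\<dots> = (\<forall>p\<in>Vs. sat V2 R2 y (if f p then Atom p else Neg (Atom p)))" by blast
  also have "\<dots> = (\<forall>p\<in>Vs. f p = V2 y p)" by (intro ball_cong refl) simp
  finally show ?thesis .
qed

lemma props_lits: "finite Vs \<Longrightarrow> wf_fm (lits Vs f) \<and> vars (lits Vs f) \<subseteq> Vs \<and> grps (lits Vs f) = {}"
  unfolding lits_def by (auto simp: conjs_props)

lemma sat_mods:
  assumes "finite T"
  shows "sat V R w (mods G T) = ((\<forall>\<phi>\<in>T. \<exists>v. R G w v \<and> sat V R v \<phi>) \<and> (\<forall>v. R G w v \<longrightarrow> (\<exists>\<phi>\<in>T. sat V R v \<phi>)))"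
  unfolding mods_def using assms by (simp add: conjs_props disjs_props)

lemma props_mods:
  assumes "finite T" "G \<noteq> {}"
  shows "wf_fm (mods G T) = (\<forall>\<phi>\<in>T. wf_fm \<phi>)"
    "vars (mods G T) = \<Union> (vars ` T)"
    "grps (mods G T) = (if T = {} then {G} else insert G (\<Union> (grps ` T)))"
  unfolding mods_def using assms by (auto simp: conjs_props disjs_props)

lemma FF_props:
  assumes "finite Vs" "finite Gs" "\<forall>G\<in>Gs. G \<noteq> {}"
  shows "\<phi> \<in> FF n Vs Gs \<Longrightarrow> wf_fm \<phi> \<and> vars \<phi> \<subseteq> Vs \<and> grps \<phi> \<subseteq> Gs"
proof (induction n arbitrary: \<phi>)
  case 0 then show ?case using props_lits[OF assms(1)] by auto
next
  case (Suc n)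
  from Suc.prems obtain ST where phi0: "\<phi> = (\<lambda>(S, TT). Conj (lits Vs (\<lambda>p. p \<in> S)) (conjs ((\<lambda>G. mods G (TT G)) ` Gs))) ST"
    and ST0: "ST \<in> Pow Vs \<times> (PiE Gs (\<lambda>_. Pow (FF n Vs Gs)))"
    unfolding FF.simps by (rule imageE)
  obtain S T where "ST = (S, T)" by (cases ST)
  then have ST: "S \<subseteq> Vs" "T \<in> PiE Gs (\<lambda>_. Pow (FF n Vs Gs))"
    and phi: "\<phi> = Conj (lits Vs (\<lambda>p. p \<in> S)) (conjs ((\<lambda>G. mods G (T G)) ` Gs))" using ST0 phi0 by auto
  have fT: "\<And>G. G \<in> Gs \<Longrightarrow> finite (T G)"
  proof -
    fix G assume "G \<in> Gs"
    then have "T G \<subseteq> FF n Vs Gs" using ST(2) by auto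
    then show "finite (T G)" using finite_FF[OF assms(1,2)] by (rule finite_subset)
  qed
  have TF: "\<And>G \<psi>. G \<in> Gs \<Longrightarrow> \<psi> \<in> T G \<Longrightarrow> wf_fm \<psi> \<and> vars \<psi> \<subseteq> Vs \<and> grps \<psi> \<subseteq> Gs"
    using ST(2) Suc.IH by blast
  have m: "\<And>G. G \<in> Gs \<Longrightarrow> wf_fm (mods G (T G)) \<and> vars (mods G (T G)) \<subseteq> Vs \<and> grps (mods G (T G)) \<subseteq> Gs"
  proof -
    fix G assume G: "G \<in> Gs"
    have Gne: "G \<noteq> {}" using assms(3) G by blast
    have "wf_fm (mods G (T G))" using props_mods(1)[OF fT[OF G] Gne] TF[OF G] by auto
    moreover have "vars (mods G (T G)) \<subseteq> Vs" using props_mods(2)[OF fT[OF G] Gne] TF[OF G] by auto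
    moreover have "grps (mods G (T G)) \<subseteq> Gs" using props_mods(3)[OF fT[OF G] Gne] G TF[OF G] by auto
    ultimately show "wf_fm (mods G (T G)) \<and> vars (mods G (T G)) \<subseteq> Vs \<and> grps (mods G (T G)) \<subseteq> Gs" by blast
  qed
  have fG: "finite ((\<lambda>G. mods G (T G)) ` Gs)" using assms(2) by simp
  have l: "wf_fm (lits Vs (\<lambda>p. p \<in> S)) \<and> vars (lits Vs (\<lambda>p. p \<in> S)) \<subseteq> Vs \<and> grps (lits Vs (\<lambda>p. p \<in> S)) = {}"
    by (rule props_lits[OF assms(1)])
  show ?case using m l unfolding phi by (auto simp: conjs_props[OF fG])
qed

lemma chi_correct:
  assumes "finite Vs" "finite Gs"
  shows "sat V2 R2 y (chi n Vs Gs V R x) = eqv Vs Gs n V R x V2 R2 y"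
proof (induction n arbitrary: x y)
  case 0 then show ?case by (simp add: sat_lits[OF assms(1)])
next
  case (Suc n)
  have f: "\<And>G. finite ((\<lambda>x'. chi n Vs Gs V R x') ` {x'. R G x x'})" by (rule finite_chi_set[OF assms])
  have fG: "finite ((\<lambda>G. mods G ((\<lambda>x'. chi n Vs Gs V R x') ` {x'. R G x x'})) ` Gs)" using assms(2) by simp
  have "sat V2 R2 y (chi (Suc n) Vs Gs V R x) = ((\<forall>p\<in>Vs. V x p = V2 y p) \<and>
     (\<forall>G\<in>Gs. (\<forall>x'. R G x x' \<longrightarrow> (\<exists>v. R2 G y v \<and> sat V2 R2 v (chi n Vs Gs V R x'))) \<and>
              (\<forall>v. R2 G y v \<longrightarrow> (\<exists>x'. R G x x' \<and> sat V2 R2 v (chi n Vs Gs V R x')))))"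
    by (simp add: sat_lits[OF assms(1)] conjs_props[OF fG] sat_mods[OF f]; blast?)
  also have "\<dots> = eqv Vs Gs (Suc n) V R x V2 R2 y" using Suc.IH by simp
  finally show ?case .
qed


definition lmodel :: "logic \<Rightarrow> 'w set \<Rightarrow> ('agt set \<Rightarrow> 'w \<Rightarrow> 'w \<Rightarrow> bool) \<Rightarrow> bool" where
  "lmodel L D R \<longleftrightarrow>
     (\<forall>G w v. w \<in> D \<longrightarrow> R G w v \<longrightarrow> v \<in> D) \<and>
     (\<forall>G H w v. w \<in> D \<longrightarrow> H \<subseteq> G \<longrightarrow> H \<noteq> {} \<longrightarrow> R G w v \<longrightarrow> R H w v) \<and>
     (L = LKD \<longrightarrow> (\<forall>a w. w \<in> D \<longrightarrow> (\<exists>v. R {a} w v))) \<and>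
     (L = LKT \<longrightarrow> (\<forall>G w. w \<in> D \<longrightarrow> G \<noteq> {} \<longrightarrow> R G w w))"

lemma lm_closed: "lmodel L D R \<Longrightarrow> w \<in> D \<Longrightarrow> R G w v \<Longrightarrow> v \<in> D"
  unfolding lmodel_def by (drule conjunct1) (erule allE[of _ G], erule allE[of _ w], erule allE[of _ v], simp)
lemma lm_anti: "lmodel L D R \<Longrightarrow> w \<in> D \<Longrightarrow> H \<subseteq> G \<Longrightarrow> H \<noteq> {} \<Longrightarrow> R G w v \<Longrightarrow> R H w v"
  unfolding lmodel_def by (drule conjunct2, drule conjunct1) (erule allE[of _ G], erule allE[of _ H], erule allE[of _ w], erule allE[of _ v], simp)
lemma lm_serial: "lmodel LKD D R \<Longrightarrow> w \<in> D \<Longrightarrow> \<exists>v. R {a} w v"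
  unfolding lmodel_def by simp
lemma lm_refl: "lmodel LKT D R \<Longrightarrow> w \<in> D \<Longrightarrow> G \<noteq> {} \<Longrightarrow> R G w w"
  unfolding lmodel_def by simp
definition seqsat :: "('w \<Rightarrow> 'p \<Rightarrow> bool) \<Rightarrow> ('agt set \<Rightarrow> 'w \<Rightarrow> 'w \<Rightarrow> bool) \<Rightarrow> 'w \<Rightarrow> ('p, 'agt) fm multiset \<Rightarrow> ('p, 'agt) fm multiset \<Rightarrow> bool" where
  "seqsat V R w \<Gamma> \<Delta> \<longleftrightarrow> ((\<forall>\<phi>\<in>#\<Gamma>. sat V R w \<phi>) \<longrightarrow> (\<exists>\<phi>\<in>#\<Delta>. sat V R w \<phi>))"

definition wfs :: "('p, 'agt) fm multiset \<Rightarrow> ('p, 'agt) fm multiset \<Rightarrow> bool" where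
  "wfs \<Gamma> \<Delta> \<longleftrightarrow> (\<forall>\<phi>\<in>#\<Gamma> + \<Delta>. wf_fm \<phi>)"

lemma soundness0:
  assumes "derivable L \<Gamma> \<Delta>" "lmodel L D R"
  shows "wfs \<Gamma> \<Delta> \<longrightarrow> (\<forall>w\<in>D. seqsat V R w \<Gamma> \<Delta>)"
  using assms(1)
proof (induction rule: derivable.induct)
  case (init p \<Gamma> \<Delta>) then show ?case by (simp add: seqsat_def)
next
  case (botL \<Gamma> \<Delta>) then show ?case by (simp add: seqsat_def)
next
  case (conjR \<Gamma> a1 \<Delta> a2)
  then show ?case by (simp add: seqsat_def wfs_def; blast?)
next
  case (conjL a1 a2 \<Gamma> \<Delta>)
  then show ?case by (simp add: seqsat_def wfs_def; blast?)
next
  case (disjR \<Gamma> a1 a2 \<Delta>)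
  then show ?case by (simp add: seqsat_def wfs_def; blast?)
next
  case (disjL a1 \<Gamma> \<Delta> a2)
  then show ?case by (simp add: seqsat_def wfs_def; blast?)
next
  case (impR a1 \<Gamma> a2 \<Delta>)
  then show ?case by (simp add: seqsat_def wfs_def; blast?)
next
  case (impL \<Gamma> a1 \<Delta> a2)
  then show ?case by (simp add: seqsat_def wfs_def; blast?)
next
  case (negR a \<Gamma> \<Delta>)
  then show ?case by (simp add: seqsat_def wfs_def; blast?)
next
  case (negL \<Gamma> a \<Delta>)
  then show ?case by (simp add: seqsat_def wfs_def; blast?)
next
  case (DK X b G \<Sigma> \<Omega>)
  show ?case
  proof (intro impI ballI)
    assume wf: "wfs (\<Sigma> + image_mset (\<lambda>x. Dk (fst x) (snd x)) X) (add_mset (Dk G b) \<Omega>)"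
    fix w assume wD: "w \<in> D"
    have G: "G \<noteq> {}" using wf by (simp add: wfs_def)
    have wfD: "\<And>x. x \<in># X \<Longrightarrow> wf_fm (Dk (fst x) (snd x))"
    proof -
      fix x assume "x \<in># X"
      then have "Dk (fst x) (snd x) \<in># \<Sigma> + image_mset (\<lambda>x. Dk (fst x) (snd x)) X + add_mset (Dk G b) \<Omega>" by simp
      then show "wf_fm (Dk (fst x) (snd x))" using wf unfolding wfs_def by blast
    qed
    have wfb: "wf_fm b" using wf by (simp add: wfs_def)
    have wfp: "wfs (image_mset snd X) {#b#}" using wfD wfb by (auto simp: wfs_def)
    have wfx: "\<And>x. x \<in># X \<Longrightarrow> fst x \<noteq> {}" using wfD by simp
    show "seqsat V R w (\<Sigma> + image_mset (\<lambda>x. Dk (fst x) (snd x)) X) (add_mset (Dk G b) \<Omega>)"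
      unfolding seqsat_def
    proof
      assume ante: "\<forall>\<phi>\<in>#\<Sigma> + image_mset (\<lambda>x. Dk (fst x) (snd x)) X. sat V R w \<phi>"
      have "sat V R w (Dk G b)"
      proof (simp, intro allI impI)
        fix v assume Rv: "R G w v"
        have vD: "v \<in> D" using lm_closed[OF assms(2) wD Rv] .
        have "\<forall>\<phi>\<in>#image_mset snd X. sat V R v \<phi>"
        proof
          fix \<phi> assume "\<phi> \<in># image_mset snd X"
          then obtain x where x: "x \<in># X" "\<phi> = snd x" by auto
          have "Dk (fst x) (snd x) \<in># \<Sigma> + image_mset (\<lambda>x. Dk (fst x) (snd x)) X" using x by auto
          then have s: "sat V R w (Dk (fst x) (snd x))" using ante by blast
          have "R (fst x) w v" using lm_anti[OF assms(2) wD DK.hyps(2)[rule_format, OF x(1)] wfx[OF x(1)] Rv] .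
          then show "sat V R v \<phi>" using s x by simp
        qed
        then show "sat V R v b" using DK.IH wfp vD by (simp add: seqsat_def)
      qed
      then show "\<exists>\<phi>\<in>#add_mset (Dk G b) \<Omega>. sat V R w \<phi>" by simp
    qed
  qed
next
  case (DD \<Gamma> \<Sigma> a \<Omega>)
  show ?case
  proof (intro impI ballI)
    assume wf: "wfs (\<Sigma> + image_mset (Dk {a}) \<Gamma>) \<Omega>"
    fix w assume wD: "w \<in> D"
    have wfp: "wfs \<Gamma> {#}" unfolding wfs_def
    proof
      fix \<phi> assume "\<phi> \<in># \<Gamma> + {#}"
      then have "Dk {a} \<phi> \<in># \<Sigma> + image_mset (Dk {a}) \<Gamma> + \<Omega>" by simp
      from bspec[OF wf[unfolded wfs_def] this] show "wf_fm \<phi>" by simp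
    qed
    have lmd: "lmodel LKD D R" using assms(2) DD.hyps(1) by simp
    obtain v where Rv: "R {a} w v" using lm_serial[OF lmd wD] by blast
    have vD: "v \<in> D" using lm_closed[OF assms(2) wD Rv] .
    show "seqsat V R w (\<Sigma> + image_mset (Dk {a}) \<Gamma>) \<Omega>"
      unfolding seqsat_def
    proof
      assume ante: "\<forall>\<phi>\<in>#\<Sigma> + image_mset (Dk {a}) \<Gamma>. sat V R w \<phi>"
      have "\<forall>\<phi>\<in>#\<Gamma>. sat V R v \<phi>"
      proof
        fix \<phi> assume "\<phi> \<in># \<Gamma>"
        then have "Dk {a} \<phi> \<in># \<Sigma> + image_mset (Dk {a}) \<Gamma>" by simp
        from bspec[OF ante this] Rv show "sat V R v \<phi>" by simp
      qed
      moreover have "seqsat V R v \<Gamma> {#}" using DD.IH wfp vD by blast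
      ultimately have False unfolding seqsat_def by simp
      then show "\<exists>\<phi>\<in>#\<Omega>. sat V R w \<phi>" ..
    qed
  qed
next
  case (DT G a \<Gamma> \<Delta>)
  show ?case
  proof (intro impI ballI)
    assume wf: "wfs (add_mset (Dk G a) \<Gamma>) \<Delta>"
    fix w assume wD: "w \<in> D"
    have G: "G \<noteq> {}" using wf by (simp add: wfs_def)
    have wfp: "wfs (add_mset (Dk G a) (add_mset a \<Gamma>)) \<Delta>" using wf unfolding wfs_def by simp
    have lmt: "lmodel LKT D R" using assms(2) DT.hyps(1) by simp
    have Rw: "R G w w" using lm_refl[OF lmt wD G] .
    show "seqsat V R w (add_mset (Dk G a) \<Gamma>) \<Delta>"
      unfolding seqsat_def
    proof
      assume ante: "\<forall>\<phi>\<in>#add_mset (Dk G a) \<Gamma>. sat V R w \<phi>"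
      then have "sat V R w a" using Rw by simp
      moreover have "seqsat V R w (add_mset (Dk G a) (add_mset a \<Gamma>)) \<Delta>" using DT.IH wfp wD by blast
      ultimately show "\<exists>\<phi>\<in>#\<Delta>. sat V R w \<phi>" using ante unfolding seqsat_def by simp
    qed
  qed
qed

section \<open>Completeness\<close>

fun iscomp :: "('p, 'agt) fm \<Rightarrow> bool" where
  "iscomp (Conj a b) = True" | "iscomp (Disj a b) = True" | "iscomp (Imp a b) = True"
| "iscomp (Neg a) = True" | "iscomp _ = False"

fun isbox :: "('p, 'agt) fm \<Rightarrow> bool" where
  "isbox (Dk G a) = True" | "isbox _ = False"

fun grp :: "('p, 'agt) fm \<Rightarrow> 'agt set" where
  "grp (Dk G a) = G" | "grp _ = {}"

fun inn :: "('p, 'agt) fm \<Rightarrow> ('p, 'agt) fm" where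
  "inn (Dk G a) = a" | "inn _ = Bot"

lemma isbox_eq: "isbox \<phi> \<Longrightarrow> Dk (grp \<phi>) (inn \<phi>) = \<phi>"
  by (cases \<phi>) auto

fun doneL :: "('p, 'agt) fm set \<Rightarrow> ('p, 'agt) fm set \<Rightarrow> ('p, 'agt) fm \<Rightarrow> bool" where
  "doneL A B (Conj a b) = (a \<in> A \<and> b \<in> A)"
| "doneL A B (Disj a b) = (a \<in> A \<or> b \<in> A)"
| "doneL A B (Imp a b) = (a \<in> B \<or> b \<in> A)"
| "doneL A B (Neg a) = (a \<in> B)"
| "doneL A B _ = False"

fun doneR :: "('p, 'agt) fm set \<Rightarrow> ('p, 'agt) fm set \<Rightarrow> ('p, 'agt) fm \<Rightarrow> bool" where
  "doneR A B (Conj a b) = (a \<in> B \<or> b \<in> B)"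
| "doneR A B (Disj a b) = (a \<in> B \<and> b \<in> B)"
| "doneR A B (Imp a b) = (a \<in> A \<and> b \<in> B)"
| "doneR A B (Neg a) = (a \<in> A)"
| "doneR A B _ = False"

lemma doneL_mono: "doneL A B \<phi> \<Longrightarrow> A \<subseteq> A' \<Longrightarrow> B \<subseteq> B' \<Longrightarrow> doneL A' B' \<phi>"
  by (cases \<phi>) auto
lemma doneR_mono: "doneR A B \<phi> \<Longrightarrow> A \<subseteq> A' \<Longrightarrow> B \<subseteq> B' \<Longrightarrow> doneR A' B' \<phi>"
  by (cases \<phi>) auto

definition hk :: "logic \<Rightarrow> ('p, 'agt) fm set \<Rightarrow> ('p, 'agt) fm set \<Rightarrow> bool" where
  "hk L A B \<longleftrightarrow> (\<forall>\<phi>\<in>A \<union> B. wf_fm \<phi>) \<and> (\<forall>p. Atom p \<in> A \<longrightarrow> Atom p \<notin> B) \<and> Bot \<notin> A \<and>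
     (\<forall>\<phi>\<in>A. iscomp \<phi> \<longrightarrow> doneL A B \<phi>) \<and> (\<forall>\<phi>\<in>B. iscomp \<phi> \<longrightarrow> doneR A B \<phi>) \<and>
     (\<forall>G b. Dk G b \<in> B \<longrightarrow> (\<exists>X. set_mset X = {(H, \<gamma>). Dk H \<gamma> \<in> A \<and> H \<subseteq> G} \<and>
                                  \<not> derivable L (image_mset snd X) {#b#})) \<and>
     (L = LKD \<longrightarrow> (\<forall>a. \<exists>Y. set_mset Y = {\<gamma>. Dk {a} \<gamma> \<in> A} \<and> (Y \<noteq> {#} \<longrightarrow> \<not> derivable L Y {#}))) \<and>
     (L = LKT \<longrightarrow> (\<forall>G a. Dk G a \<in> A \<longrightarrow> a \<in> A))"

definition invs :: "logic \<Rightarrow> ('p, 'agt) fm multiset \<Rightarrow> ('p, 'agt) fm multiset \<Rightarrow> ('p, 'agt) fm set \<Rightarrow> ('p, 'agt) fm set \<Rightarrow> ('p, 'agt) fm set \<Rightarrow> bool" where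
  "invs L \<Gamma> \<Delta> A B U \<longleftrightarrow> set_mset \<Gamma> \<subseteq> A \<and> set_mset \<Delta> \<subseteq> B \<and> (\<forall>\<phi>\<in>A \<union> B. wf_fm \<phi>) \<and>
     (\<forall>\<phi>\<in>A. \<phi> \<in># \<Gamma> \<or> (iscomp \<phi> \<and> doneL A B \<phi>)) \<and>
     (\<forall>\<phi>\<in>B. \<phi> \<in># \<Delta> \<or> (iscomp \<phi> \<and> doneR A B \<phi>)) \<and>
     (\<forall>G a. Dk G a \<in> U \<longrightarrow> a \<in> A)"

lemma inv_step:
  assumes "invs L \<Gamma> \<Delta> A B U"
    and "\<forall>\<phi>\<in>#\<Gamma>. \<phi> \<in># \<Gamma>2 \<or> (iscomp \<phi> \<and> doneL (A \<union> set_mset \<Gamma>2) (B \<union> set_mset \<Delta>2) \<phi>)"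
    and "\<forall>\<phi>\<in>#\<Delta>. \<phi> \<in># \<Delta>2 \<or> (iscomp \<phi> \<and> doneR (A \<union> set_mset \<Gamma>2) (B \<union> set_mset \<Delta>2) \<phi>)"
    and "\<forall>\<phi>\<in>#\<Gamma>2 + \<Delta>2. wf_fm \<phi>"
    and "\<forall>G a. Dk G a \<in> U2 \<longrightarrow> a \<in> A \<union> set_mset \<Gamma>2"
  shows "invs L \<Gamma>2 \<Delta>2 (A \<union> set_mset \<Gamma>2) (B \<union> set_mset \<Delta>2) U2"
  unfolding invs_def
proof (intro conjI)
  show "set_mset \<Gamma>2 \<subseteq> A \<union> set_mset \<Gamma>2" by blast
  show "set_mset \<Delta>2 \<subseteq> B \<union> set_mset \<Delta>2" by blast
  show "\<forall>\<phi>\<in>A \<union> set_mset \<Gamma>2 \<union> (B \<union> set_mset \<Delta>2). wf_fm \<phi>"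
    using assms(1,4) unfolding invs_def by auto
  show "\<forall>\<phi>\<in>A \<union> set_mset \<Gamma>2. \<phi> \<in># \<Gamma>2 \<or> iscomp \<phi> \<and> doneL (A \<union> set_mset \<Gamma>2) (B \<union> set_mset \<Delta>2) \<phi>"
  proof
    fix \<phi> assume "\<phi> \<in> A \<union> set_mset \<Gamma>2"
    moreover
    { assume "\<phi> \<in> A"
      then have "\<phi> \<in># \<Gamma> \<or> (iscomp \<phi> \<and> doneL A B \<phi>)" using assms(1) unfolding invs_def by blast
      moreover have "doneL A B \<phi> \<Longrightarrow> doneL (A \<union> set_mset \<Gamma>2) (B \<union> set_mset \<Delta>2) \<phi>"
        by (erule doneL_mono) auto
      ultimately have "\<phi> \<in># \<Gamma>2 \<or> iscomp \<phi> \<and> doneL (A \<union> set_mset \<Gamma>2) (B \<union> set_mset \<Delta>2) \<phi>"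
        using assms(2) by blast }
    ultimately show "\<phi> \<in># \<Gamma>2 \<or> iscomp \<phi> \<and> doneL (A \<union> set_mset \<Gamma>2) (B \<union> set_mset \<Delta>2) \<phi>"
      by blast
  qed
  show "\<forall>\<phi>\<in>B \<union> set_mset \<Delta>2. \<phi> \<in># \<Delta>2 \<or> iscomp \<phi> \<and> doneR (A \<union> set_mset \<Gamma>2) (B \<union> set_mset \<Delta>2) \<phi>"
  proof
    fix \<phi> assume "\<phi> \<in> B \<union> set_mset \<Delta>2"
    moreover
    { assume "\<phi> \<in> B"
      then have "\<phi> \<in># \<Delta> \<or> (iscomp \<phi> \<and> doneR A B \<phi>)" using assms(1) unfolding invs_def by blast
      moreover have "doneR A B \<phi> \<Longrightarrow> doneR (A \<union> set_mset \<Gamma>2) (B \<union> set_mset \<Delta>2) \<phi>"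
        by (erule doneR_mono) auto
      ultimately have "\<phi> \<in># \<Delta>2 \<or> iscomp \<phi> \<and> doneR (A \<union> set_mset \<Gamma>2) (B \<union> set_mset \<Delta>2) \<phi>"
        using assms(3) by blast }
    ultimately show "\<phi> \<in># \<Delta>2 \<or> iscomp \<phi> \<and> doneR (A \<union> set_mset \<Gamma>2) (B \<union> set_mset \<Delta>2) \<phi>"
      by blast
  qed
  show "\<forall>G a. Dk G a \<in> U2 \<longrightarrow> a \<in> A \<union> set_mset \<Gamma>2" using assms(5) .
qed

lemma sum_Un_le_nat: "finite A \<Longrightarrow> finite B \<Longrightarrow> sum (f::_\<Rightarrow>nat) (A \<union> B) \<le> sum f A + sum f B"
  using sum.union_inter[of A B f] by simp

definition w3 :: "('p, 'agt) fm \<Rightarrow> nat" where "w3 \<phi> = 3 ^ size \<phi>"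
definition cw :: "('p, 'agt) fm \<Rightarrow> nat" where "cw \<phi> = (if iscomp \<phi> then w3 \<phi> else 0)"
definition bw :: "('p, 'agt) fm \<Rightarrow> nat" where "bw \<phi> = (if isbox \<phi> then w3 \<phi> else 0)"

definition meas :: "('p, 'agt) fm multiset \<Rightarrow> ('p, 'agt) fm multiset \<Rightarrow> ('p, 'agt) fm set \<Rightarrow> nat" where
  "meas \<Gamma> \<Delta> U = sum_mset (image_mset cw \<Gamma>) + sum_mset (image_mset cw \<Delta>) + sum bw (set_mset \<Gamma> - U)"

lemma cw_bw: "cw \<phi> + bw \<phi> \<le> w3 \<phi>"
  by (cases \<phi>) (auto simp: cw_def bw_def)

lemma sum_bw_le: "sum bw (set_mset N) \<le> sum_mset (image_mset bw N)"
proof (induction N)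
  case empty then show ?case by simp
next
  case (add x N)
  show ?case
  proof (cases "x \<in># N")
    case True then show ?thesis using add by (simp add: insert_absorb)
  next
    case False then show ?thesis using add by simp
  qed
qed

lemma M1: "meas (\<Gamma> + N) \<Delta> U \<le> meas \<Gamma> \<Delta> U + sum_mset (image_mset w3 N)"
proof -
  have s: "set_mset (\<Gamma> + N) - U \<subseteq> (set_mset \<Gamma> - U) \<union> set_mset N" by auto
  have "sum bw (set_mset (\<Gamma> + N) - U) \<le> sum bw ((set_mset \<Gamma> - U) \<union> set_mset N)"
    by (rule sum_mono2[OF _ s]) auto
  also have "\<dots> \<le> sum bw (set_mset \<Gamma> - U) + sum bw (set_mset N)"
    by (rule sum_Un_le_nat) auto
  also have "\<dots> \<le> sum bw (set_mset \<Gamma> - U) + sum_mset (image_mset bw N)"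
    using sum_bw_le by simp
  finally have b: "sum bw (set_mset (\<Gamma> + N) - U) \<le> sum bw (set_mset \<Gamma> - U) + sum_mset (image_mset bw N)" .
  have c: "sum_mset (image_mset cw N) + sum_mset (image_mset bw N) \<le> sum_mset (image_mset w3 N)"
  proof (induction N)
    case empty then show ?case by simp
  next
    case (add x N) then show ?case using cw_bw[of x] by simp
  qed
  show ?thesis using b c unfolding meas_def by simp
qed

lemma M2: "meas \<Gamma> (\<Delta> + N) U \<le> meas \<Gamma> \<Delta> U + sum_mset (image_mset w3 N)"
proof -
  have c: "sum_mset (image_mset cw N) \<le> sum_mset (image_mset w3 N)"
  proof (induction N)
    case empty then show ?case by simp
  next
    case (add x N) then show ?case using cw_bw[of x] by simp
  qed
  show ?thesis using c unfolding meas_def by simp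
qed

lemma M3: "iscomp \<phi> \<Longrightarrow> meas \<Gamma> \<Delta> U + w3 \<phi> \<le> meas (add_mset \<phi> \<Gamma>) \<Delta> U"
proof -
  assume c: "iscomp \<phi>"
  have "sum bw (set_mset \<Gamma> - U) \<le> sum bw (set_mset (add_mset \<phi> \<Gamma>) - U)"
    by (rule sum_mono2) auto
  then show ?thesis using c unfolding meas_def cw_def by simp
qed

lemma M4: "iscomp \<phi> \<Longrightarrow> meas \<Gamma> \<Delta> U + w3 \<phi> \<le> meas \<Gamma> (add_mset \<phi> \<Delta>) U"
  unfolding meas_def cw_def by simp

lemma M5:
  assumes "Dk G a \<in># \<Gamma>" "Dk G a \<notin> U"
  shows "meas (add_mset a \<Gamma>) \<Delta> (insert (Dk G a) U) + w3 (Dk G a) \<le> meas \<Gamma> \<Delta> U + w3 a"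
proof -
  have s: "set_mset (add_mset a \<Gamma>) - insert (Dk G a) U \<subseteq> ((set_mset \<Gamma> - U) - {Dk G a}) \<union> {a}" by auto
  have "sum bw (set_mset (add_mset a \<Gamma>) - insert (Dk G a) U) \<le> sum bw (((set_mset \<Gamma> - U) - {Dk G a}) \<union> {a})"
    by (rule sum_mono2[OF _ s]) auto
  also have "\<dots> \<le> sum bw ((set_mset \<Gamma> - U) - {Dk G a}) + bw a"
    using sum_Un_le_nat[of "(set_mset \<Gamma> - U) - {Dk G a}" "{a}" bw] by simp
  finally have b1: "sum bw (set_mset (add_mset a \<Gamma>) - insert (Dk G a) U) \<le> sum bw ((set_mset \<Gamma> - U) - {Dk G a}) + bw a" .
  have "Dk G a \<in> set_mset \<Gamma> - U" using assms by simp
  then have b2: "sum bw (set_mset \<Gamma> - U) = bw (Dk G a) + sum bw ((set_mset \<Gamma> - U) - {Dk G a})"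
    by (simp add: sum.remove)
  have "bw (Dk G a) = w3 (Dk G a)" by (simp add: bw_def)
  then show ?thesis using b1 b2 cw_bw[of a] unfolding meas_def by simp
qed

lemma w3_2: "w3 a + w3 b < w3 (Conj a b)" "w3 a + w3 b < w3 (Disj a b)" "w3 a + w3 b < w3 (Imp a b)"
  "w3 a < w3 (Neg a)" "w3 a < w3 (Dk G a)"
proof -
  have k: "(3::nat) ^ x + 3 ^ y < 3 ^ (x + y + Suc 0)" for x y :: nat
  proof -
    have "(3::nat) ^ x \<le> 3 ^ (x + y)" "(3::nat) ^ y \<le> 3 ^ (x + y)" "(0::nat) < 3 ^ (x + y)" by (simp_all add: power_increasing)
    moreover have "(3::nat) ^ (x + y + Suc 0) = 3 * 3 ^ (x + y)" by simp
    ultimately show ?thesis by linarith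
  qed
  show "w3 a + w3 b < w3 (Conj a b)" "w3 a + w3 b < w3 (Disj a b)" "w3 a + w3 b < w3 (Imp a b)"
    unfolding w3_def using k by simp_all
  show "w3 a < w3 (Neg a)" "w3 a < w3 (Dk G a)" unfolding w3_def by simp_all
qed


lemma nonbox_in_Gamma:
  assumes "invs L \<Gamma> \<Delta> A B U" "\<phi> \<in> A" "\<not> iscomp \<phi>"
  shows "\<phi> \<in># \<Gamma>"
  using assms unfolding invs_def by blast

lemma nonbox_in_Delta:
  assumes "invs L \<Gamma> \<Delta> A B U" "\<phi> \<in> B" "\<not> iscomp \<phi>"
  shows "\<phi> \<in># \<Delta>"
  using assms unfolding invs_def by blast

lemma terminal_hk:
  assumes nd: "\<not> derivable L \<Gamma> \<Delta>" and iv: "invs L \<Gamma> \<Delta> A B U"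
    and ncG: "\<forall>\<phi>\<in>#\<Gamma>. \<not> iscomp \<phi>" and ncD: "\<forall>\<phi>\<in>#\<Delta>. \<not> iscomp \<phi>"
    and T: "L = LKT \<longrightarrow> (\<forall>\<phi>\<in>#\<Gamma>. isbox \<phi> \<longrightarrow> \<phi> \<in> U)"
  shows "hk L A B"
proof -
  have GA: "set_mset \<Gamma> \<subseteq> A" and DB: "set_mset \<Delta> \<subseteq> B" and wfAB: "\<forall>\<phi>\<in>A \<union> B. wf_fm \<phi>"
    and UA: "\<forall>G a. Dk G a \<in> U \<longrightarrow> a \<in> A"
    using iv unfolding invs_def by blast+
  have A1: "\<forall>p. Atom p \<in> A \<longrightarrow> Atom p \<notin> B"
  proof (intro allI impI notI)
    fix p assume "Atom p \<in> A" "Atom p \<in> B"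
    then have "Atom p \<in># \<Gamma>" "Atom p \<in># \<Delta>" using nonbox_in_Gamma[OF iv] nonbox_in_Delta[OF iv] by auto
    then obtain \<Gamma>0 \<Delta>0 where "\<Gamma> = add_mset (Atom p) \<Gamma>0" "\<Delta> = add_mset (Atom p) \<Delta>0"
      by (metis multi_member_split)
    then have "derivable L \<Gamma> \<Delta>" using derivable.init by simp
    then show False using nd by simp
  qed
  have A2: "Bot \<notin> A"
  proof
    assume "Bot \<in> A"
    then have "Bot \<in># \<Gamma>" using nonbox_in_Gamma[OF iv] by auto
    then obtain \<Gamma>0 where "\<Gamma> = add_mset Bot \<Gamma>0" by (metis multi_member_split)
    then have "derivable L \<Gamma> \<Delta>" using derivable.botL by simp
    then show False using nd by simp
  qed
  have A3: "\<forall>\<phi>\<in>A. iscomp \<phi> \<longrightarrow> doneL A B \<phi>"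
    using iv ncG unfolding invs_def by blast
  have A4: "\<forall>\<phi>\<in>B. iscomp \<phi> \<longrightarrow> doneR A B \<phi>"
    using iv ncD unfolding invs_def by blast
  have boxA: "\<And>H \<gamma>. Dk H \<gamma> \<in> A \<longleftrightarrow> Dk H \<gamma> \<in># \<Gamma>"
    using nonbox_in_Gamma[OF iv] GA by fastforce
  have A5: "\<forall>G b. Dk G b \<in> B \<longrightarrow> (\<exists>X. set_mset X = {(H, \<gamma>). Dk H \<gamma> \<in> A \<and> H \<subseteq> G} \<and>
                                  \<not> derivable L (image_mset snd X) {#b#})"
  proof (intro allI impI)
    fix G b assume "Dk G b \<in> B"
    then have "Dk G b \<in># \<Delta>" using nonbox_in_Delta[OF iv] by auto
    then obtain \<Omega> where D: "\<Delta> = add_mset (Dk G b) \<Omega>" by (metis multi_member_split)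
    define P where "P = (\<lambda>\<phi>::('a, 'b) fm. isbox \<phi> \<and> grp \<phi> \<subseteq> G)"
    define F where "F = filter_mset P \<Gamma>"
    define S where "S = filter_mset (\<lambda>\<phi>. \<not> P \<phi>) \<Gamma>"
    define X where "X = image_mset (\<lambda>\<phi>. (grp \<phi>, inn \<phi>)) F"
    have imX: "image_mset (\<lambda>x. Dk (fst x) (snd x)) X = F"
    proof -
      have "image_mset (\<lambda>x. Dk (fst x) (snd x)) X = image_mset (\<lambda>\<phi>. Dk (grp \<phi>) (inn \<phi>)) F"
        unfolding X_def by (simp add: multiset.map_comp comp_def)
      also have "\<dots> = image_mset (\<lambda>\<phi>. \<phi>) F"
        by (rule image_mset_cong) (simp add: F_def P_def isbox_eq)
      finally show ?thesis by simp
    qed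
    have GSF0: "\<Gamma> = F + S" unfolding S_def F_def by (rule multiset_partition)
    have GSF: "\<Gamma> = S + F" using GSF0 by (simp add: add.commute)
    have setX: "set_mset X = {(H, \<gamma>). Dk H \<gamma> \<in> A \<and> H \<subseteq> G}"
    proof (rule set_eqI, rule iffI)
      fix x assume "x \<in># X"
      then obtain \<phi> where "\<phi> \<in># \<Gamma>" "P \<phi>" "x = (grp \<phi>, inn \<phi>)" unfolding X_def F_def by auto
      then show "x \<in> {(H, \<gamma>). Dk H \<gamma> \<in> A \<and> H \<subseteq> G}" using GA isbox_eq[of \<phi>] unfolding P_def by auto
    next
      fix x assume "x \<in> {(H, \<gamma>). Dk H \<gamma> \<in> A \<and> H \<subseteq> G}"
      then obtain H \<gamma> where x: "x = (H, \<gamma>)" "Dk H \<gamma> \<in> A" "H \<subseteq> G" by blast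
      then have "Dk H \<gamma> \<in># F" using boxA unfolding F_def P_def by simp
      then show "x \<in># X" unfolding X_def using x by force
    qed
    have fstX: "\<forall>x\<in>#X. fst x \<subseteq> G" unfolding X_def F_def P_def by auto
    have sigS: "\<forall>s\<in>#S. sigmaK_ok G s"
    proof
      fix s assume "s \<in># S"
      then have "s \<in># \<Gamma>" "\<not> P s" unfolding S_def by auto
      then have "\<not> iscomp s" "\<not> P s" using ncG by auto
      then show "sigmaK_ok G s" unfolding P_def by (cases s) auto
    qed
    have omO: "\<forall>w\<in>#\<Omega>. omega_ok w"
    proof
      fix w assume "w \<in># \<Omega>"
      then have "\<not> iscomp w" using ncD D by auto
      then show "omega_ok w" by (cases w) auto
    qed
    show "\<exists>X. set_mset X = {(H, \<gamma>). Dk H \<gamma> \<in> A \<and> H \<subseteq> G} \<and> \<not> derivable L (image_mset snd X) {#b#}"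
    proof (intro exI conjI)
      show "set_mset X = {(H, \<gamma>). Dk H \<gamma> \<in> A \<and> H \<subseteq> G}" by (rule setX)
      show "\<not> derivable L (image_mset snd X) {#b#}"
      proof
        assume "derivable L (image_mset snd X) {#b#}"
        from derivable.DK[OF this fstX sigS omO] have "derivable L (S + F) (add_mset (Dk G b) \<Omega>)"
          by (simp add: imX)
        then show False using nd GSF D by simp
      qed
    qed
  qed
  have A6: "L = LKD \<longrightarrow> (\<forall>a. \<exists>Y. set_mset Y = {\<gamma>. Dk {a} \<gamma> \<in> A} \<and> (Y \<noteq> {#} \<longrightarrow> \<not> derivable L Y {#}))"
  proof (intro impI allI)
    fix a assume LD: "L = LKD"
    define P where "P = (\<lambda>\<phi>::('a, 'b) fm. isbox \<phi> \<and> grp \<phi> = {a})"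
    define F where "F = filter_mset P \<Gamma>"
    define S where "S = filter_mset (\<lambda>\<phi>. \<not> P \<phi>) \<Gamma>"
    define Y where "Y = image_mset inn F"
    have imY: "image_mset (Dk {a}) Y = F"
    proof -
      have "image_mset (Dk {a}) Y = image_mset (\<lambda>\<phi>. Dk {a} (inn \<phi>)) F"
        unfolding Y_def by (simp add: multiset.map_comp comp_def)
      also have "\<dots> = image_mset (\<lambda>\<phi>. \<phi>) F"
      proof (rule image_mset_cong)
        fix \<phi> assume "\<phi> \<in># F"
        then have "isbox \<phi>" "grp \<phi> = {a}" by (auto simp: F_def P_def)
        then show "Dk {a} (inn \<phi>) = \<phi>" using isbox_eq[of \<phi>] by simp
      qed
      finally show ?thesis by simp
    qed
    have GSF0: "\<Gamma> = F + S" unfolding S_def F_def by (rule multiset_partition)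
    have GSF: "\<Gamma> = S + F" using GSF0 by (simp add: add.commute)
    have setY: "set_mset Y = {\<gamma>. Dk {a} \<gamma> \<in> A}"
    proof (rule set_eqI, rule iffI)
      fix x assume "x \<in># Y"
      then obtain \<phi> where "\<phi> \<in># \<Gamma>" "P \<phi>" "x = inn \<phi>" unfolding Y_def F_def by auto
      then show "x \<in> {\<gamma>. Dk {a} \<gamma> \<in> A}" using GA isbox_eq[of \<phi>] unfolding P_def by auto
    next
      fix x assume "x \<in> {\<gamma>. Dk {a} \<gamma> \<in> A}"
      then have "Dk {a} x \<in># F" using boxA unfolding F_def P_def by simp
      then show "x \<in># Y" unfolding Y_def by force
    qed
    have sigS: "\<forall>s\<in>#S. sigmaD_ok a s"
    proof
      fix s assume "s \<in># S"
      then have "s \<in># \<Gamma>" "\<not> P s" unfolding S_def by auto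
      then have "\<not> iscomp s" "\<not> P s" using ncG by auto
      then show "sigmaD_ok a s" unfolding P_def by (cases s) auto
    qed
    have omO: "\<forall>w\<in>#\<Delta>. omega_ok w"
    proof
      fix w assume "w \<in># \<Delta>"
      then have "\<not> iscomp w" using ncD by auto
      then show "omega_ok w" by (cases w) auto
    qed
    show "\<exists>Y. set_mset Y = {\<gamma>. Dk {a} \<gamma> \<in> A} \<and> (Y \<noteq> {#} \<longrightarrow> \<not> derivable L Y {#})"
    proof (intro exI conjI impI)
      show "set_mset Y = {\<gamma>. Dk {a} \<gamma> \<in> A}" by (rule setY)
      assume ne: "Y \<noteq> {#}"
      show "\<not> derivable L Y {#}"
      proof
        assume "derivable L Y {#}"
        from derivable.DD[OF LD this ne sigS omO] have "derivable L (S + F) \<Delta>"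
          by (simp add: imY)
        then show False using nd GSF by simp
      qed
    qed
  qed
  have A7: "L = LKT \<longrightarrow> (\<forall>G a. Dk G a \<in> A \<longrightarrow> a \<in> A)"
  proof (intro impI allI)
    fix G a assume "L = LKT" "Dk G a \<in> A"
    then have "Dk G a \<in> U" using T boxA by auto
    then show "a \<in> A" using UA by blast
  qed
  show ?thesis unfolding hk_def using wfAB A1 A2 A3 A4 A5 A6 A7 by blast
qed


lemma ext_step:
  fixes \<Gamma> :: "('p, 'agt) fm multiset"
  assumes IH: "(\<forall>(\<Gamma>::('p, 'agt) fm multiset) \<Delta> A B U. meas \<Gamma> \<Delta> U < n \<longrightarrow> \<not> derivable L \<Gamma> \<Delta> \<longrightarrow> invs L \<Gamma> \<Delta> A B U \<longrightarrow>
      (\<exists>A' B'. hk L A' B' \<and> A \<subseteq> A' \<and> B \<subseteq> B'))" and iv: "invs L \<Gamma> \<Delta> A B U"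
    and nd: "\<not> derivable L \<Gamma>2 \<Delta>2" and m: "meas \<Gamma>2 \<Delta>2 U2 < n"
    and c2: "\<forall>\<phi>\<in>#\<Gamma>. \<phi> \<in># \<Gamma>2 \<or> (iscomp \<phi> \<and> doneL (A \<union> set_mset \<Gamma>2) (B \<union> set_mset \<Delta>2) \<phi>)"
    and c3: "\<forall>\<phi>\<in>#\<Delta>. \<phi> \<in># \<Delta>2 \<or> (iscomp \<phi> \<and> doneR (A \<union> set_mset \<Gamma>2) (B \<union> set_mset \<Delta>2) \<phi>)"
    and c4: "\<forall>\<phi>\<in>#\<Gamma>2 + \<Delta>2. wf_fm \<phi>"
    and c5: "\<forall>G a. Dk G a \<in> U2 \<longrightarrow> a \<in> A \<union> set_mset \<Gamma>2"
  shows "\<exists>A' B'. hk L A' B' \<and> A \<subseteq> A' \<and> B \<subseteq> B'"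
proof -
  have "invs L \<Gamma>2 \<Delta>2 (A \<union> set_mset \<Gamma>2) (B \<union> set_mset \<Delta>2) U2"
    by (rule inv_step[OF iv c2 c3 c4 c5])
  then obtain A' B' where "hk L A' B'" "A \<union> set_mset \<Gamma>2 \<subseteq> A'" "B \<union> set_mset \<Delta>2 \<subseteq> B'"
    using IH nd m by blast
  then show ?thesis by blast
qed

lemma invs_wf: "invs L \<Gamma> \<Delta> A B U \<Longrightarrow> \<phi> \<in># \<Gamma> + \<Delta> \<Longrightarrow> wf_fm \<phi>"
  unfolding invs_def by auto

lemma invs_UA: "invs L \<Gamma> \<Delta> A B U \<Longrightarrow> Dk G a \<in> U \<Longrightarrow> a \<in> A"
  unfolding invs_def by auto

lemma ext_all: "(\<forall>(\<Gamma>::('p, 'agt) fm multiset) \<Delta> A B U. meas \<Gamma> \<Delta> U < n \<longrightarrow> \<not> derivable L \<Gamma> \<Delta> \<longrightarrow> invs L \<Gamma> \<Delta> A B U \<longrightarrow>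
      (\<exists>A' B'. hk L A' B' \<and> A \<subseteq> A' \<and> B \<subseteq> B'))"
proof (induction n)
  case 0 then show ?case by simp
next
  case (Suc n)
  show ?case
  proof (intro allI impI)
    fix \<Gamma> :: "('p, 'agt) fm multiset" and \<Delta> A B U
    assume m: "meas \<Gamma> \<Delta> U < Suc n" and nd: "\<not> derivable L \<Gamma> \<Delta>" and iv: "invs L \<Gamma> \<Delta> A B U"
    have wfG: "\<And>\<phi>. \<phi> \<in># \<Gamma> \<Longrightarrow> wf_fm \<phi>" using invs_wf[OF iv] by simp
    have wfD: "\<And>\<phi>. \<phi> \<in># \<Delta> \<Longrightarrow> wf_fm \<phi>" using invs_wf[OF iv] by simp
    have UA: "\<And>G a. Dk G a \<in> U \<Longrightarrow> a \<in> A" using invs_UA[OF iv] by blast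
    show "\<exists>A' B'. hk L A' B' \<and> A \<subseteq> A' \<and> B \<subseteq> B'"
    proof (cases "\<exists>\<phi>\<in>#\<Gamma>. iscomp \<phi>")
      case True
      then obtain \<phi> where "\<phi> \<in># \<Gamma>" "iscomp \<phi>" by blast
      then obtain \<Gamma>0 where G: "\<Gamma> = add_mset \<phi> \<Gamma>0" by (metis multi_member_split)
      have m0: "meas \<Gamma>0 \<Delta> U + w3 \<phi> \<le> n" using M3[OF \<open>iscomp \<phi>\<close>, of \<Gamma>0 \<Delta> U] m G by simp
      have wfphi: "wf_fm \<phi>" using wfG G by simp
      have wfG0: "\<And>\<psi>. \<psi> \<in># \<Gamma>0 \<Longrightarrow> wf_fm \<psi>" using wfG G by simp
      show ?thesis
      proof (cases \<phi>)
        case (Conj a b)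
        have nd2: "\<not> derivable L (add_mset a (add_mset b \<Gamma>0)) \<Delta>" using nd G Conj derivable.conjL by blast
        have "meas (\<Gamma>0 + {#a, b#}) \<Delta> U \<le> meas \<Gamma>0 \<Delta> U + (w3 a + w3 b)" using M1[of \<Gamma>0 "{#a, b#}" \<Delta> U] by simp
        then have m2: "meas (add_mset a (add_mset b \<Gamma>0)) \<Delta> U < n" using m0 w3_2(1)[of a b] Conj by simp
        show ?thesis
          by (rule ext_step[OF Suc.IH iv nd2 m2]) (use G Conj wfphi wfG0 wfD UA in auto)
      next
        case (Disj a b)
        have m0': "meas \<Gamma>0 \<Delta> U + w3 a < n" "meas \<Gamma>0 \<Delta> U + w3 b < n" using m0 w3_2(2)[of a b] Disj by simp_all
        have ma: "meas (add_mset a \<Gamma>0) \<Delta> U < n" using M1[of \<Gamma>0 "{#a#}" \<Delta> U] m0'(1) by simp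
        have mb: "meas (add_mset b \<Gamma>0) \<Delta> U < n" using M1[of \<Gamma>0 "{#b#}" \<Delta> U] m0'(2) by simp
        have "\<not> derivable L (add_mset a \<Gamma>0) \<Delta> \<or> \<not> derivable L (add_mset b \<Gamma>0) \<Delta>"
          using nd G Disj derivable.disjL by blast
        then show ?thesis
        proof
          assume nd2: "\<not> derivable L (add_mset a \<Gamma>0) \<Delta>"
          show ?thesis
            by (rule ext_step[OF Suc.IH iv nd2 ma]) (use G Disj wfphi wfG0 wfD UA in auto)
        next
          assume nd2: "\<not> derivable L (add_mset b \<Gamma>0) \<Delta>"
          show ?thesis
            by (rule ext_step[OF Suc.IH iv nd2 mb]) (use G Disj wfphi wfG0 wfD UA in auto)
        qed
      next
        case (Imp a b)
        have m0': "meas \<Gamma>0 \<Delta> U + w3 a < n" "meas \<Gamma>0 \<Delta> U + w3 b < n" using m0 w3_2(3)[of a b] Imp by simp_all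
        have ma: "meas \<Gamma>0 (add_mset a \<Delta>) U < n" using M2[of \<Gamma>0 \<Delta> "{#a#}" U] m0'(1) by simp
        have mb: "meas (add_mset b \<Gamma>0) \<Delta> U < n" using M1[of \<Gamma>0 "{#b#}" \<Delta> U] m0'(2) by simp
        have "\<not> derivable L \<Gamma>0 (add_mset a \<Delta>) \<or> \<not> derivable L (add_mset b \<Gamma>0) \<Delta>"
          using nd G Imp derivable.impL by blast
        then show ?thesis
        proof
          assume nd2: "\<not> derivable L \<Gamma>0 (add_mset a \<Delta>)"
          show ?thesis
            by (rule ext_step[OF Suc.IH iv nd2 ma]) (use G Imp wfphi wfG0 wfD UA in auto)
        next
          assume nd2: "\<not> derivable L (add_mset b \<Gamma>0) \<Delta>"
          show ?thesis
            by (rule ext_step[OF Suc.IH iv nd2 mb]) (use G Imp wfphi wfG0 wfD UA in auto)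
        qed
      next
        case (Neg a)
        have m0': "meas \<Gamma>0 \<Delta> U + w3 a < n" using m0 w3_2(4)[of a] Neg by simp
        have ma: "meas \<Gamma>0 (add_mset a \<Delta>) U < n" using M2[of \<Gamma>0 \<Delta> "{#a#}" U] m0' by simp
        have nd2: "\<not> derivable L \<Gamma>0 (add_mset a \<Delta>)" using nd G Neg derivable.negL by blast
        show ?thesis
          by (rule ext_step[OF Suc.IH iv nd2 ma]) (use G Neg wfphi wfG0 wfD UA in auto)
      qed (use \<open>iscomp \<phi>\<close> in auto)
    next
      case ncG: False
      show ?thesis
      proof (cases "\<exists>\<phi>\<in>#\<Delta>. iscomp \<phi>")
        case True
        then obtain \<phi> where "\<phi> \<in># \<Delta>" "iscomp \<phi>" by blast
        then obtain \<Delta>0 where D: "\<Delta> = add_mset \<phi> \<Delta>0" by (metis multi_member_split)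
        have m0: "meas \<Gamma> \<Delta>0 U + w3 \<phi> \<le> n" using M4[OF \<open>iscomp \<phi>\<close>, of \<Gamma> \<Delta>0 U] m D by simp
        have wfphi: "wf_fm \<phi>" using wfD D by simp
        have wfD0: "\<And>\<psi>. \<psi> \<in># \<Delta>0 \<Longrightarrow> wf_fm \<psi>" using wfD D by simp
        show ?thesis
        proof (cases \<phi>)
          case (Conj a b)
          have m0': "meas \<Gamma> \<Delta>0 U + w3 a < n" "meas \<Gamma> \<Delta>0 U + w3 b < n" using m0 w3_2(1)[of a b] Conj by simp_all
          have ma: "meas \<Gamma> (add_mset a \<Delta>0) U < n" using M2[of \<Gamma> \<Delta>0 "{#a#}" U] m0'(1) by simp
          have mb: "meas \<Gamma> (add_mset b \<Delta>0) U < n" using M2[of \<Gamma> \<Delta>0 "{#b#}" U] m0'(2) by simp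
          have "\<not> derivable L \<Gamma> (add_mset a \<Delta>0) \<or> \<not> derivable L \<Gamma> (add_mset b \<Delta>0)"
            using nd D Conj derivable.conjR by blast
          then show ?thesis
          proof
            assume nd2: "\<not> derivable L \<Gamma> (add_mset a \<Delta>0)"
            show ?thesis
              by (rule ext_step[OF Suc.IH iv nd2 ma]) (use D Conj wfphi wfG wfD0 UA in auto)
          next
            assume nd2: "\<not> derivable L \<Gamma> (add_mset b \<Delta>0)"
            show ?thesis
              by (rule ext_step[OF Suc.IH iv nd2 mb]) (use D Conj wfphi wfG wfD0 UA in auto)
          qed
        next
          case (Disj a b)
          have nd2: "\<not> derivable L \<Gamma> (add_mset a (add_mset b \<Delta>0))" using nd D Disj derivable.disjR by blast
          have "meas \<Gamma> (\<Delta>0 + {#a, b#}) U \<le> meas \<Gamma> \<Delta>0 U + (w3 a + w3 b)" using M2[of \<Gamma> \<Delta>0 "{#a, b#}" U] by simp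
          then have m2: "meas \<Gamma> (add_mset a (add_mset b \<Delta>0)) U < n" using m0 w3_2(2)[of a b] Disj by simp
          show ?thesis
            by (rule ext_step[OF Suc.IH iv nd2 m2]) (use D Disj wfphi wfG wfD0 UA in auto)
        next
          case (Imp a b)
          have nd2: "\<not> derivable L (add_mset a \<Gamma>) (add_mset b \<Delta>0)" using nd D Imp derivable.impR by blast
          have "meas (\<Gamma> + {#a#}) (\<Delta>0 + {#b#}) U \<le> meas \<Gamma> (\<Delta>0 + {#b#}) U + w3 a" using M1[of \<Gamma> "{#a#}" "\<Delta>0 + {#b#}" U] by simp
          moreover have "meas \<Gamma> (\<Delta>0 + {#b#}) U \<le> meas \<Gamma> \<Delta>0 U + w3 b" using M2[of \<Gamma> \<Delta>0 "{#b#}" U] by simp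
          ultimately have m2: "meas (add_mset a \<Gamma>) (add_mset b \<Delta>0) U < n" using m0 w3_2(3)[of a b] Imp by simp
          show ?thesis
            by (rule ext_step[OF Suc.IH iv nd2 m2]) (use D Imp wfphi wfG wfD0 UA in auto)
        next
          case (Neg a)
          have nd2: "\<not> derivable L (add_mset a \<Gamma>) \<Delta>0" using nd D Neg derivable.negR by blast
          have "meas (\<Gamma> + {#a#}) \<Delta>0 U \<le> meas \<Gamma> \<Delta>0 U + w3 a" using M1[of \<Gamma> "{#a#}" \<Delta>0 U] by simp
          then have m2: "meas (add_mset a \<Gamma>) \<Delta>0 U < n" using m0 w3_2(4)[of a] Neg by simp
          show ?thesis
            by (rule ext_step[OF Suc.IH iv nd2 m2]) (use D Neg wfphi wfG wfD0 UA in auto)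
        qed (use \<open>iscomp \<phi>\<close> in auto)
      next
        case ncD: False
        show ?thesis
        proof (cases "L = LKT \<and> (\<exists>\<phi>\<in>#\<Gamma>. isbox \<phi> \<and> \<phi> \<notin> U)")
          case True
          then obtain \<phi> where LT: "L = LKT" and ph: "\<phi> \<in># \<Gamma>" "isbox \<phi>" "\<phi> \<notin> U" by blast
          obtain G a where phi: "\<phi> = Dk G a" using ph(2) by (cases \<phi>) auto
          obtain \<Gamma>0 where G: "\<Gamma> = add_mset \<phi> \<Gamma>0" using ph(1) by (metis multi_member_split)
          have nd2: "\<not> derivable L (add_mset a \<Gamma>) \<Delta>"
          proof
            assume "derivable L (add_mset a \<Gamma>) \<Delta>"
            then have "derivable L (add_mset (Dk G a) (add_mset a \<Gamma>0)) \<Delta>" using G phi by (simp add: add_mset_commute)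
            from derivable.DT[OF LT this] show False using nd G phi by simp
          qed
          have "meas (add_mset a \<Gamma>) \<Delta> (insert (Dk G a) U) + w3 (Dk G a) \<le> meas \<Gamma> \<Delta> U + w3 a"
            using M5[of G a \<Gamma> U \<Delta>] ph phi by simp
          then have m2: "meas (add_mset a \<Gamma>) \<Delta> (insert (Dk G a) U) < n" using m w3_2(5)[of a G] by simp
          have wfa: "wf_fm a" using wfG ph(1) phi by fastforce
          show ?thesis
            by (rule ext_step[OF Suc.IH iv nd2 m2]) (use wfa wfG wfD UA in auto)
        next
          case False
          then have T: "L = LKT \<longrightarrow> (\<forall>\<phi>\<in>#\<Gamma>. isbox \<phi> \<longrightarrow> \<phi> \<in> U)" by blast
          have "hk L A B" using terminal_hk[OF nd iv _ _ T] ncG ncD by blast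
          then show ?thesis by blast
        qed
      qed
    qed
  qed
qed

lemma extension:
  assumes "\<not> derivable L \<Gamma> \<Delta>" "\<forall>\<phi>\<in>#\<Gamma> + \<Delta>. wf_fm \<phi>"
  shows "\<exists>A B. hk L A B \<and> set_mset \<Gamma> \<subseteq> A \<and> set_mset \<Delta> \<subseteq> B"
proof -
  have "invs L \<Gamma> \<Delta> (set_mset \<Gamma>) (set_mset \<Delta>) {}"
    using assms(2) unfolding invs_def by auto
  then show ?thesis using ext_all[of "Suc (meas \<Gamma> \<Delta> {})" L] assms(1) by blast
qed


section \<open>Canonical model\<close>

type_synonym ('p, 'agt) W = "('p, 'agt) fm set \<times> ('p, 'agt) fm set"

definition Dc :: "logic \<Rightarrow> (('p, 'agt) fm set \<times> ('p, 'agt) fm set) set" where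
  "Dc L = {w. hk L (fst w) (snd w)}"

definition Rc :: "logic \<Rightarrow> 'agt set \<Rightarrow> ('p, 'agt) fm set \<times> ('p, 'agt) fm set \<Rightarrow> ('p, 'agt) fm set \<times> ('p, 'agt) fm set \<Rightarrow> bool" where
  "Rc L G w v \<longleftrightarrow> hk L (fst v) (snd v) \<and> (\<forall>H \<gamma>. Dk H \<gamma> \<in> fst w \<and> H \<subseteq> G \<longrightarrow> \<gamma> \<in> fst v)"

definition Vc :: "('p, 'agt) fm set \<times> ('p, 'agt) fm set \<Rightarrow> 'p \<Rightarrow> bool" where
  "Vc w p \<longleftrightarrow> Atom p \<in> fst w"

lemma not_der_empty: "\<not> derivable L {#} {#}"
proof
  assume "derivable L {#} {#}"
  then show False
  proof (cases rule: derivable.cases)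
    case DK then show ?thesis by simp
  next
    case DD then show ?thesis by simp
  qed simp_all
qed


lemma hk_parts:
  assumes "hk L A B"
  shows "\<forall>\<phi>\<in>A \<union> B. wf_fm \<phi>" "\<forall>p. Atom p \<in> A \<longrightarrow> Atom p \<notin> B" "Bot \<notin> A"
     "\<forall>\<phi>\<in>A. iscomp \<phi> \<longrightarrow> doneL A B \<phi>" "\<forall>\<phi>\<in>B. iscomp \<phi> \<longrightarrow> doneR A B \<phi>"
     "\<forall>G b. Dk G b \<in> B \<longrightarrow> (\<exists>X. set_mset X = {(H, \<gamma>). Dk H \<gamma> \<in> A \<and> H \<subseteq> G} \<and>
                                  \<not> derivable L (image_mset snd X) {#b#})"
     "L = LKD \<longrightarrow> (\<forall>a. \<exists>Y. set_mset Y = {\<gamma>. Dk {a} \<gamma> \<in> A} \<and> (Y \<noteq> {#} \<longrightarrow> \<not> derivable L Y {#}))"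
     "L = LKT \<longrightarrow> (\<forall>G a. Dk G a \<in> A \<longrightarrow> a \<in> A)"
  using assms unfolding hk_def by simp_all

lemma hk_wf: "hk L A B \<Longrightarrow> \<phi> \<in> A \<or> \<phi> \<in> B \<Longrightarrow> wf_fm \<phi>"
  using hk_parts(1) by blast
lemma hk_atom: "hk L A B \<Longrightarrow> Atom p \<in> A \<Longrightarrow> Atom p \<notin> B"
  using hk_parts(2) by blast
lemma hk_bot: "hk L A B \<Longrightarrow> Bot \<notin> A"
  using hk_parts(3) by blast
lemma hk_L: "hk L A B \<Longrightarrow> \<phi> \<in> A \<Longrightarrow> iscomp \<phi> \<Longrightarrow> doneL A B \<phi>"
  using hk_parts(4) by blast
lemma hk_R: "hk L A B \<Longrightarrow> \<phi> \<in> B \<Longrightarrow> iscomp \<phi> \<Longrightarrow> doneR A B \<phi>"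
  using hk_parts(5) by blast
lemma hk_K: "hk L A B \<Longrightarrow> Dk G b \<in> B \<Longrightarrow> \<exists>X. set_mset X = {(H, \<gamma>). Dk H \<gamma> \<in> A \<and> H \<subseteq> G} \<and>
                                  \<not> derivable L (image_mset snd X) {#b#}"
  using hk_parts(6) by blast
lemma hk_D: "hk LKD A B \<Longrightarrow> \<exists>Y. set_mset Y = {\<gamma>. Dk {a} \<gamma> \<in> A} \<and> (Y \<noteq> {#} \<longrightarrow> \<not> derivable LKD Y {#})"
  by (drule hk_parts(7)) simp
lemma hk_T: "hk LKT A B \<Longrightarrow> Dk G a \<in> A \<Longrightarrow> a \<in> A"
  by (drule hk_parts(8)) simp

lemma canon_lmodel: "lmodel L (Dc L :: ('p, 'agt) W set) (Rc L)"
  unfolding lmodel_def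
proof (intro conjI)
  show "\<forall>G (w::('p, 'agt) W) v. w \<in> Dc L \<longrightarrow> Rc L G w v \<longrightarrow> v \<in> Dc L" unfolding Dc_def Rc_def by simp
  show "\<forall>G H (w::('p, 'agt) W) v. w \<in> Dc L \<longrightarrow> H \<subseteq> G \<longrightarrow> H \<noteq> {} \<longrightarrow> Rc L G w v \<longrightarrow> Rc L H w v"
    unfolding Rc_def by (meson order_trans)
  show "L = LKD \<longrightarrow> (\<forall>a (w::('p, 'agt) W). w \<in> Dc L \<longrightarrow> (\<exists>v. Rc L {a} w v))"
  proof (intro impI allI)
    fix a and w :: "('p, 'agt) W" assume LD: "L = LKD" and wD: "w \<in> Dc L"
    obtain A B where w: "w = (A, B)" by (cases w)
    have hkw: "hk LKD A B" using wD w LD unfolding Dc_def by simp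
    obtain Y where Y: "set_mset Y = {\<gamma>. Dk {a} \<gamma> \<in> A}" "Y \<noteq> {#} \<longrightarrow> \<not> derivable LKD Y {#}"
      using hk_D[OF hkw] by blast
    have nd: "\<not> derivable LKD Y {#}"
    proof (cases "Y = {#}")
      case True then show ?thesis using not_der_empty by simp
    next
      case False then show ?thesis using Y(2) by simp
    qed
    have wfY: "\<forall>\<phi>\<in>#Y + {#}. wf_fm \<phi>"
    proof
      fix \<phi> assume "\<phi> \<in># Y + {#}"
      then have "Dk {a} \<phi> \<in> A" using Y(1) by simp
      then have "wf_fm (Dk {a} \<phi>)" using hk_wf[OF hkw] by blast
      then show "wf_fm \<phi>" by simp
    qed
    obtain A' B' where hk': "hk LKD A' B'" and YA: "set_mset Y \<subseteq> A'"
      using extension[OF nd wfY] by blast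
    have "Rc LKD {a} (A, B) (A', B')"
      unfolding Rc_def
    proof (simp add: hk', intro allI impI)
      fix H \<gamma> assume "Dk H \<gamma> \<in> A \<and> H \<subseteq> {a}"
      moreover then have "H \<noteq> {}" using hk_wf[OF hkw, of "Dk H \<gamma>"] by auto
      ultimately have "H = {a}" "Dk H \<gamma> \<in> A" by auto
      then show "\<gamma> \<in> A'" using Y(1) YA by auto
    qed
    then show "\<exists>v. Rc L {a} w v" using LD w by blast
  qed
  show "L = LKT \<longrightarrow> (\<forall>G (w::('p, 'agt) W). w \<in> Dc L \<longrightarrow> G \<noteq> {} \<longrightarrow> Rc L G w w)"
  proof (intro impI allI)
    fix G :: "'agt set" and w :: "('p, 'agt) W" assume LT: "L = LKT" and wD: "w \<in> Dc L" and "G \<noteq> {}"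
    have hkw: "hk LKT (fst w) (snd w)" using wD LT unfolding Dc_def by simp
    show "Rc L G w w" unfolding Rc_def using hkw hk_T[OF hkw] LT by blast
  qed
qed

lemma truth:
  fixes \<phi> :: "('p, 'agt) fm"
  shows "\<forall>A B. hk L A B \<longrightarrow> (\<phi> \<in> A \<longrightarrow> sat Vc (Rc L) (A, B) \<phi>) \<and> (\<phi> \<in> B \<longrightarrow> \<not> sat Vc (Rc L) (A, B) \<phi>)"
proof (induction \<phi>)
  case (Atom p)
  then show ?case by (auto simp: Vc_def dest: hk_atom)
next
  case Bot
  then show ?case using hk_bot by auto
next
  case (Conj a b)
  show ?case
  proof (intro allI impI conjI)
    fix A B :: "('p, 'agt) fm set" assume h: "hk L A B"
    { assume "Conj a b \<in> A" then have "a \<in> A" "b \<in> A" using hk_L[OF h] by fastforce+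
      then show "sat Vc (Rc L) (A, B) (Conj a b)" using Conj.IH h by simp }
    { assume "Conj a b \<in> B" then have "a \<in> B \<or> b \<in> B" using hk_R[OF h] by fastforce
      then show "\<not> sat Vc (Rc L) (A, B) (Conj a b)" using Conj.IH h by auto }
  qed
next
  case (Disj a b)
  show ?case
  proof (intro allI impI conjI)
    fix A B :: "('p, 'agt) fm set" assume h: "hk L A B"
    { assume "Disj a b \<in> A" then have "a \<in> A \<or> b \<in> A" using hk_L[OF h] by fastforce
      then show "sat Vc (Rc L) (A, B) (Disj a b)" using Disj.IH h by auto }
    { assume "Disj a b \<in> B" then have "a \<in> B" "b \<in> B" using hk_R[OF h] by fastforce+
      then show "\<not> sat Vc (Rc L) (A, B) (Disj a b)" using Disj.IH h by auto }
  qed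
next
  case (Imp a b)
  show ?case
  proof (intro allI impI conjI)
    fix A B :: "('p, 'agt) fm set" assume h: "hk L A B"
    { assume "Imp a b \<in> A" then have "a \<in> B \<or> b \<in> A" using hk_L[OF h] by fastforce
      then show "sat Vc (Rc L) (A, B) (Imp a b)" using Imp.IH h by auto }
    { assume "Imp a b \<in> B" then have "a \<in> A" "b \<in> B" using hk_R[OF h] by fastforce+
      then show "\<not> sat Vc (Rc L) (A, B) (Imp a b)" using Imp.IH h by auto }
  qed
next
  case (Neg a)
  show ?case
  proof (intro allI impI conjI)
    fix A B :: "('p, 'agt) fm set" assume h: "hk L A B"
    { assume "Neg a \<in> A" then have "a \<in> B" using hk_L[OF h] by fastforce
      then show "sat Vc (Rc L) (A, B) (Neg a)" using Neg.IH h by auto }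
    { assume "Neg a \<in> B" then have "a \<in> A" using hk_R[OF h] by fastforce
      then show "\<not> sat Vc (Rc L) (A, B) (Neg a)" using Neg.IH h by auto }
  qed
next
  case (Dk G b)
  show ?case
  proof (intro allI impI conjI)
    fix A B :: "('p, 'agt) fm set" assume h: "hk L A B"
    { assume inA: "Dk G b \<in> A"
      show "sat Vc (Rc L) (A, B) (Dk G b)"
      proof (simp, intro allI impI)
        fix v assume R: "Rc L G (A, B) v"
        then have "hk L (fst v) (snd v)" "b \<in> fst v" using inA unfolding Rc_def by auto
        then show "sat Vc (Rc L) v b" using Dk.IH by (cases v) auto
      qed }
    { assume inB: "Dk G b \<in> B"
      obtain X where X: "set_mset X = {(H, \<gamma>). Dk H \<gamma> \<in> A \<and> H \<subseteq> G}" "\<not> derivable L (image_mset snd X) {#b#}"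
        using hk_K[OF h inB] by blast
      have wfs: "\<forall>\<phi>\<in>#image_mset snd X + {#b#}. wf_fm \<phi>"
      proof
        fix \<phi> assume "\<phi> \<in># image_mset snd X + {#b#}"
        then consider (a) "\<phi> \<in># image_mset snd X" | (b) "\<phi> = b" by auto
        then show "wf_fm \<phi>"
        proof cases
          case a
          then obtain H where "(H, \<phi>) \<in># X" by auto
          then have "Dk H \<phi> \<in> A" using X(1) by auto
          then show ?thesis using hk_wf[OF h, of "Dk H \<phi>"] by simp
        next
          case b then show ?thesis using hk_wf[OF h, of "Dk G b"] inB by simp
        qed
      qed
      obtain A' B' where h': "hk L A' B'" and s1: "set_mset (image_mset snd X) \<subseteq> A'" and s2: "set_mset {#b#} \<subseteq> B'"
        using extension[OF X(2) wfs] by blast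
      have R: "Rc L G (A, B) (A', B')"
        unfolding Rc_def
      proof (simp add: h', intro allI impI)
        fix H \<gamma> assume "Dk H \<gamma> \<in> A \<and> H \<subseteq> G"
        then have "(H, \<gamma>) \<in># X" using X(1) by auto
        then have "\<gamma> \<in># image_mset snd X" by force
        then show "\<gamma> \<in> A'" using s1 by blast
      qed
      have "\<not> sat Vc (Rc L) (A', B') b" using Dk.IH h' s2 by simp
      then show "\<not> sat Vc (Rc L) (A, B) (Dk G b)" using R by auto }
  qed
qed

lemma canon_equiv:
  assumes "wf_fm a" "wf_fm b"
  shows "derivable L {#a#} {#b#} \<longleftrightarrow> (\<forall>w\<in>Dc L. sat Vc (Rc L) w a \<longrightarrow> sat Vc (Rc L) w b)"
proof
  assume d: "derivable L {#a#} {#b#}"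
  have "wfs {#a#} {#b#}" using assms by (simp add: wfs_def)
  then have "\<forall>w\<in>Dc L. seqsat Vc (Rc L) w {#a#} {#b#}" using soundness0[OF d canon_lmodel] by blast
  then show "\<forall>w\<in>Dc L. sat Vc (Rc L) w a \<longrightarrow> sat Vc (Rc L) w b" unfolding seqsat_def by simp
next
  assume v: "\<forall>w\<in>Dc L. sat Vc (Rc L) w a \<longrightarrow> sat Vc (Rc L) w b"
  show "derivable L {#a#} {#b#}"
  proof (rule ccontr)
    assume nd: "\<not> derivable L {#a#} {#b#}"
    have "\<forall>\<phi>\<in>#{#a#} + {#b#}. wf_fm \<phi>" using assms by simp
    then obtain A B where h: "hk L A B" and "a \<in> A" "b \<in> B" using extension[OF nd] by auto
    then have "sat Vc (Rc L) (A, B) a" "\<not> sat Vc (Rc L) (A, B) b" using truth by blast+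
    moreover have "(A, B) \<in> Dc L" using h unfolding Dc_def by simp
    ultimately show False using v by blast
  qed
qed


section \<open>Product construction\<close>

datatype ('m, 'n) pw = P 'm 'n nat | Mo 'm | No 'n

locale prodm =
  fixes L :: logic
    and DM :: "'m set" and RM :: "'agt set \<Rightarrow> 'm \<Rightarrow> 'm \<Rightarrow> bool" and VM :: "'m \<Rightarrow> 'p \<Rightarrow> bool"
    and DN :: "'n set" and RN :: "'agt set \<Rightarrow> 'n \<Rightarrow> 'n \<Rightarrow> bool" and VN :: "'n \<Rightarrow> 'p \<Rightarrow> bool"
    and V0 :: "'p set" and Q :: "'p set" and B :: "'agt set" and Gs :: "'agt set set"
  assumes lmM: "lmodel L DM RM" and lmN: "lmodel L DN RN"
    and Gs_def: "Gs = {G. G \<noteq> {} \<and> G \<inter> B = {}}"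
begin

fun KV :: "('m, 'n) pw \<Rightarrow> 'p \<Rightarrow> bool" where
  "KV (P x y n) p = (if p \<in> Q then VN y p else VM x p)"
| "KV (Mo x) p = VM x p"
| "KV (No y) p = VN y p"

fun KR :: "'agt set \<Rightarrow> ('m, 'n) pw \<Rightarrow> ('m, 'n) pw \<Rightarrow> bool" where
  "KR G (P x y n) (P x' y' m) = (RN G y y' \<and> (G - B = {} \<or> RM (G - B) x x') \<and> x' \<in> DM \<and> y' \<in> DN \<and>
      ((Suc m = n \<and> eqv V0 Gs m VM RM x' VN RN y') \<or> (L = LKT \<and> x' = x \<and> y' = y \<and> m = n)))"
| "KR G (P x y n) (Mo x') = (n = 0 \<and> x' \<in> DM \<and> (G - B = {} \<or> RM (G - B) x x'))"
| "KR G (P x y n) (No y') = (n \<noteq> 0 \<and> G - B = {} \<and> RN G y y')"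
| "KR G (Mo x) (Mo x') = (x' \<in> DM \<and> (G - B = {} \<or> RM (G - B) x x'))"
| "KR G (No y) (No y') = RN G y y'"
| "KR G (Mo x) (P x' y' m) = False"
| "KR G (Mo x) (No y') = False"
| "KR G (No y) (P x' y' m) = False"
| "KR G (No y) (Mo x') = False"

definition KD :: "('m, 'n) pw set" where
  "KD = {P x y n | x y n. x \<in> DM \<and> y \<in> DN \<and> eqv V0 Gs n VM RM x VN RN y} \<union> Mo ` DM \<union> No ` DN"

lemma KD_P: "P x y n \<in> KD \<longleftrightarrow> x \<in> DM \<and> y \<in> DN \<and> eqv V0 Gs n VM RM x VN RN y"
  unfolding KD_def by auto
lemma KD_Mo: "Mo x \<in> KD \<longleftrightarrow> x \<in> DM"
  unfolding KD_def by auto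
lemma KD_No: "No y \<in> KD \<longleftrightarrow> y \<in> DN"
  unfolding KD_def by auto

lemma antiM:
  assumes "x \<in> DM" "H \<subseteq> G" "G - B = {} \<or> RM (G - B) x x'"
  shows "H - B = {} \<or> RM (H - B) x x'"
proof (cases "H - B = {}")
  case True then show ?thesis by simp
next
  case False
  then have "G - B \<noteq> {}" using assms(2) by blast
  then have "RM (G - B) x x'" using assms(3) by simp
  then show ?thesis using lm_anti[OF lmM assms(1), of "H - B" "G - B"] False assms(2) by blast
qed

lemma K_closed: "w \<in> KD \<Longrightarrow> KR G w v \<Longrightarrow> v \<in> KD"
proof (cases w; cases v)
  fix x y n x' y' m assume "w = P x y n" "v = P x' y' m" "w \<in> KD" "KR G w v"
  then show "v \<in> KD" by (auto simp: KD_P)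
next
  fix x y n x' assume "w = P x y n" "v = Mo x'" "w \<in> KD" "KR G w v"
  then show "v \<in> KD" by (auto simp: KD_Mo)
next
  fix x y n y' assume "w = P x y n" "v = No y'" "w \<in> KD" "KR G w v"
  then show "v \<in> KD" using lm_closed[OF lmN] by (auto simp: KD_No KD_P)
next
  fix x x' assume "w = Mo x" "v = Mo x'" "w \<in> KD" "KR G w v"
  then show "v \<in> KD" by (auto simp: KD_Mo)
next
  fix y y' assume "w = No y" "v = No y'" "w \<in> KD" "KR G w v"
  then show "v \<in> KD" using lm_closed[OF lmN] by (auto simp: KD_No)
qed auto

lemma K_anti: "w \<in> KD \<Longrightarrow> H \<subseteq> G \<Longrightarrow> H \<noteq> {} \<Longrightarrow> KR G w v \<Longrightarrow> KR H w v"
proof (cases w; cases v)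
  fix x y n x' y' m assume w: "w = P x y n" and v: "v = P x' y' m" and "w \<in> KD" "H \<subseteq> G" "H \<noteq> {}" "KR G w v"
  then have xD: "x \<in> DM" and yD: "y \<in> DN" and k: "RN G y y'" "G - B = {} \<or> RM (G - B) x x'" "x' \<in> DM" "y' \<in> DN"
    "(Suc m = n \<and> eqv V0 Gs m VM RM x' VN RN y') \<or> (L = LKT \<and> x' = x \<and> y' = y \<and> m = n)"
    by (auto simp: KD_P)
  have "RN H y y'" using lm_anti[OF lmN yD \<open>H \<subseteq> G\<close> \<open>H \<noteq> {}\<close> k(1)] .
  moreover have "H - B = {} \<or> RM (H - B) x x'" using antiM[OF xD \<open>H \<subseteq> G\<close> k(2)] .
  ultimately show "KR H w v" using w v k(3-5) by simp
next
  fix x y n x' assume w: "w = P x y n" and v: "v = Mo x'" and "w \<in> KD" "H \<subseteq> G" "H \<noteq> {}" "KR G w v"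
  then have xD: "x \<in> DM" and k: "n = 0" "x' \<in> DM" "G - B = {} \<or> RM (G - B) x x'" by (auto simp: KD_P)
  show "KR H w v" using w v k antiM[OF xD \<open>H \<subseteq> G\<close> k(3)] by simp
next
  fix x y n y' assume w: "w = P x y n" and v: "v = No y'" and "w \<in> KD" "H \<subseteq> G" "H \<noteq> {}" "KR G w v"
  then have yD: "y \<in> DN" and k: "n \<noteq> 0" "G - B = {}" "RN G y y'" by (auto simp: KD_P)
  have "H - B = {}" using k(2) \<open>H \<subseteq> G\<close> by blast
  then show "KR H w v" using w v k lm_anti[OF lmN yD \<open>H \<subseteq> G\<close> \<open>H \<noteq> {}\<close> k(3)] by simp
next
  fix x x' assume w: "w = Mo x" and v: "v = Mo x'" and "w \<in> KD" "H \<subseteq> G" "H \<noteq> {}" "KR G w v"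
  then have xD: "x \<in> DM" and k: "x' \<in> DM" "G - B = {} \<or> RM (G - B) x x'" by (auto simp: KD_Mo)
  show "KR H w v" using w v k antiM[OF xD \<open>H \<subseteq> G\<close> k(2)] by simp
next
  fix y y' assume w: "w = No y" and v: "v = No y'" and "w \<in> KD" "H \<subseteq> G" "H \<noteq> {}" "KR G w v"
  then have yD: "y \<in> DN" and k: "RN G y y'" by (auto simp: KD_No)
  show "KR H w v" using w v lm_anti[OF lmN yD \<open>H \<subseteq> G\<close> \<open>H \<noteq> {}\<close> k] by simp
qed auto

lemma K_serial:
  assumes LD: "L = LKD" and wD: "w \<in> KD"
  shows "\<exists>v. KR {a} w v"
proof (cases w)
  case (P x y n)
  then have xD: "x \<in> DM" and yD: "y \<in> DN" and e: "eqv V0 Gs n VM RM x VN RN y" using wD by (auto simp: KD_P)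
  have lM: "lmodel LKD DM RM" and lN: "lmodel LKD DN RN" using lmM lmN LD by simp_all
  show ?thesis
  proof (cases "a \<in> B")
    case True
    then have aB: "{a} - B = {}" by simp
    show ?thesis
    proof (cases n)
      case 0
      then have "KR {a} w (Mo x)" using P aB xD by simp
      then show ?thesis by blast
    next
      case (Suc m)
      obtain y' where "RN {a} y y'" using lm_serial[OF lN yD] by blast
      then have "KR {a} w (No y')" using P aB Suc by simp
      then show ?thesis by blast
    qed
  next
    case False
    then have aB: "{a} - B = {a}" by auto
    obtain x' where Rx: "RM {a} x x'" using lm_serial[OF lM xD] by blast
    have x'D: "x' \<in> DM" using lm_closed[OF lmM xD Rx] .
    show ?thesis
    proof (cases n)
      case 0
      then have "KR {a} w (Mo x')" using P aB x'D Rx by simp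
      then show ?thesis by blast
    next
      case (Suc m)
      have aG: "{a} \<in> Gs" using False Gs_def by auto
      have "\<forall>x'. RM {a} x x' \<longrightarrow> (\<exists>y'. RN {a} y y' \<and> eqv V0 Gs m VM RM x' VN RN y')"
        using e Suc aG by simp
      then obtain y' where Ry: "RN {a} y y'" and e': "eqv V0 Gs m VM RM x' VN RN y'" using Rx by blast
      have y'D: "y' \<in> DN" using lm_closed[OF lmN yD Ry] .
      have "KR {a} w (P x' y' m)" using P aB Suc Rx x'D y'D Ry e' by simp
      then show ?thesis by blast
    qed
  qed
next
  case (Mo x)
  then have xD: "x \<in> DM" using wD by (simp add: KD_Mo)
  have lM: "lmodel LKD DM RM" using lmM LD by simp
  show ?thesis
  proof (cases "a \<in> B")
    case True
    then have "KR {a} w (Mo x)" using Mo xD by simp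
    then show ?thesis by blast
  next
    case False
    then have aB: "{a} - B = {a}" by auto
    obtain x' where Rx: "RM {a} x x'" using lm_serial[OF lM xD] by blast
    have x'D: "x' \<in> DM" using lm_closed[OF lmM xD Rx] .
    have "KR {a} w (Mo x')" using Mo aB x'D Rx by simp
    then show ?thesis by blast
  qed
next
  case (No y)
  then have yD: "y \<in> DN" using wD by (simp add: KD_No)
  have lN: "lmodel LKD DN RN" using lmN LD by simp
  obtain y' where "RN {a} y y'" using lm_serial[OF lN yD] by blast
  then have "KR {a} w (No y')" using No by simp
  then show ?thesis by blast
qed

lemma K_refl:
  assumes LT: "L = LKT" and wD: "w \<in> KD" and G: "G \<noteq> {}"
  shows "KR G w w"
proof -
  have lM: "lmodel LKT DM RM" and lN: "lmodel LKT DN RN" using lmM lmN LT by simp_all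
  have m: "x \<in> DM \<Longrightarrow> G - B = {} \<or> RM (G - B) x x" for x
    using lm_refl[OF lM, of x "G - B"] by blast
  show ?thesis
  proof (cases w)
    case (P x y n)
    then have xD: "x \<in> DM" and yD: "y \<in> DN" using wD by (auto simp: KD_P)
    have "RN G y y" using lm_refl[OF lN yD G] .
    then show ?thesis unfolding P KR.simps using m[OF xD] xD yD LT by blast
  next
    case (Mo x)
    then have xD: "x \<in> DM" using wD by (simp add: KD_Mo)
    show ?thesis using Mo m[OF xD] xD by simp
  next
    case (No y)
    then have yD: "y \<in> DN" using wD by (simp add: KD_No)
    show ?thesis using No lm_refl[OF lN yD G] by simp
  qed
qed

lemma K_lmodel: "lmodel L KD KR"
  unfolding lmodel_def
proof (intro conjI allI impI)
  show "\<And>G w v. w \<in> KD \<Longrightarrow> KR G w v \<Longrightarrow> v \<in> KD" by (rule K_closed)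
  show "\<And>G H w v. w \<in> KD \<Longrightarrow> H \<subseteq> G \<Longrightarrow> H \<noteq> {} \<Longrightarrow> KR G w v \<Longrightarrow> KR H w v" by (rule K_anti)
  show "\<And>a w. L = LKD \<Longrightarrow> w \<in> KD \<Longrightarrow> \<exists>v. KR {a} w v" by (rule K_serial)
  show "\<And>G w. L = LKT \<Longrightarrow> w \<in> KD \<Longrightarrow> G \<noteq> {} \<Longrightarrow> KR G w w" by (rule K_refl)
qed

end


context prodm
begin

lemma bisim_No: "y \<in> DN \<Longrightarrow> eqv Vs1 Gs1 k KV KR (No y) VN RN y"
proof (induction k arbitrary: y)
  case 0 then show ?case by simp
next
  case (Suc k)
  show ?case
  proof (simp only: eqv.simps, intro conjI ballI allI impI)
    fix p show "KV (No y) p = VN y p" by simp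
  next
    fix G v assume "G \<in> Gs1" "KR G (No y) v"
    then obtain y' where v: "v = No y'" and R: "RN G y y'" by (cases v) auto
    have "y' \<in> DN" using lm_closed[OF lmN Suc.prems R] .
    then show "\<exists>y'. RN G y y' \<and> eqv Vs1 Gs1 k KV KR v VN RN y'" using v R Suc.IH by blast
  next
    fix G y' assume "G \<in> Gs1" and R: "RN G y y'"
    have "y' \<in> DN" using lm_closed[OF lmN Suc.prems R] .
    then show "\<exists>v. KR G (No y) v \<and> eqv Vs1 Gs1 k KV KR v VN RN y'"
      using R Suc.IH by (intro exI[of _ "No y'"]) simp
  qed
qed

lemma KV_P_V0: "P x y n \<in> KD \<Longrightarrow> p \<in> V0 \<union> Q \<Longrightarrow> KV (P x y n) p = VN y p"
proof -
  assume "P x y n \<in> KD" "p \<in> V0 \<union> Q"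
  then have e: "eqv V0 Gs n VM RM x VN RN y" by (simp add: KD_P)
  show ?thesis
  proof (cases "p \<in> Q")
    case True then show ?thesis by simp
  next
    case False
    then have "p \<in> V0" using \<open>p \<in> V0 \<union> Q\<close> by simp
    then show ?thesis using eqv_atoms[OF e] False by simp
  qed
qed

lemma bisim_N: "\<forall>x y n. P x y n \<in> KD \<longrightarrow> k \<le> n \<longrightarrow> eqv (V0 \<union> Q) {G. G \<noteq> {}} k KV KR (P x y n) VN RN y"
proof (induction k)
  case 0 then show ?case using KV_P_V0 by simp
next
  case (Suc k)
  show ?case
  proof (intro allI impI)
    fix x y n assume PD: "P x y n \<in> KD" and kn: "Suc k \<le> n"
    then have xD: "x \<in> DM" and yD: "y \<in> DN" and e: "eqv V0 Gs n VM RM x VN RN y" by (auto simp: KD_P)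
    obtain m where n: "n = Suc m" and km: "k \<le> m" using kn by (cases n) auto
    show "eqv (V0 \<union> Q) {G. G \<noteq> {}} (Suc k) KV KR (P x y n) VN RN y"
    proof (simp only: eqv.simps, intro conjI ballI allI impI)
      fix p assume "p \<in> V0 \<union> Q" then show "KV (P x y n) p = VN y p" using KV_P_V0[OF PD] by simp
    next
      fix G v assume "G \<in> {G. G \<noteq> {}}" and R: "KR G (P x y n) v"
      have vD: "v \<in> KD" using K_closed[OF PD R] .
      show "\<exists>y'. RN G y y' \<and> eqv (V0 \<union> Q) {G. G \<noteq> {}} k KV KR v VN RN y'"
      proof (cases v)
        case (P x' y' m')
        then have "RN G y y'" "k \<le> m'" using R kn by auto
        then show ?thesis using Suc.IH vD P by blast
      next
        case (Mo x')
        then show ?thesis using R kn by simp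
      next
        case (No y')
        then have "RN G y y'" "y' \<in> DN" using R vD by (auto simp: KD_No)
        then show ?thesis using bisim_No No by blast
      qed
    next
      fix G y' assume G: "G \<in> {G. G \<noteq> {}}" and R: "RN G y y'"
      have y'D: "y' \<in> DN" using lm_closed[OF lmN yD R] .
      show "\<exists>v. KR G (P x y n) v \<and> eqv (V0 \<union> Q) {G. G \<noteq> {}} k KV KR v VN RN y'"
      proof (cases "G - B = {}")
        case True
        then have "KR G (P x y n) (No y')" using R n by simp
        then show ?thesis using bisim_No[OF y'D] by blast
      next
        case False
        have G'G: "G - B \<in> Gs" using False Gs_def by auto
        have R': "RN (G - B) y y'" using lm_anti[OF lmN yD _ False R] by blast
        have "\<forall>y'. RN (G - B) y y' \<longrightarrow> (\<exists>x'. RM (G - B) x x' \<and> eqv V0 Gs m VM RM x' VN RN y')"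
          using e n G'G by simp
        then obtain x' where Rx: "RM (G - B) x x'" and e': "eqv V0 Gs m VM RM x' VN RN y'" using R' by blast
        have x'D: "x' \<in> DM" using lm_closed[OF lmM xD Rx] .
        have K: "KR G (P x y n) (P x' y' m)" using R Rx x'D y'D e' n by simp
        have "P x' y' m \<in> KD" using x'D y'D e' by (simp add: KD_P)
        then have "eqv (V0 \<union> Q) {G. G \<noteq> {}} k KV KR (P x' y' m) VN RN y'" using Suc.IH km by blast
        then show ?thesis using K by blast
      qed
    qed
  qed
qed

lemma bisim_M: "(\<forall>x y n. P x y n \<in> KD \<longrightarrow> eqv (- Q) Gs k KV KR (P x y n) VM RM x) \<and>
                (\<forall>x. x \<in> DM \<longrightarrow> eqv (- Q) Gs k KV KR (Mo x) VM RM x)"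
proof (induction k)
  case 0 then show ?case by simp
next
  case (Suc k)
  have HB: "\<And>H. H \<in> Gs \<Longrightarrow> H - B = H \<and> H \<noteq> {}" using Gs_def by auto
  have part2: "\<forall>x. x \<in> DM \<longrightarrow> eqv (- Q) Gs (Suc k) KV KR (Mo x) VM RM x"
  proof (intro allI impI)
    fix x assume xD: "x \<in> DM"
    show "eqv (- Q) Gs (Suc k) KV KR (Mo x) VM RM x"
    proof (simp only: eqv.simps, intro conjI ballI allI impI)
      fix p show "KV (Mo x) p = VM x p" by simp
    next
      fix H v assume H: "H \<in> Gs" and R: "KR H (Mo x) v"
      then obtain x' where v: "v = Mo x'" and x'D: "x' \<in> DM" and Rx: "RM H x x'"
        using HB[OF H] by (cases v) auto
      then show "\<exists>x'. RM H x x' \<and> eqv (- Q) Gs k KV KR v VM RM x'" using Suc.IH by blast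
    next
      fix H x' assume H: "H \<in> Gs" and Rx: "RM H x x'"
      have x'D: "x' \<in> DM" using lm_closed[OF lmM xD Rx] .
      have "KR H (Mo x) (Mo x')" using HB[OF H] x'D Rx by simp
      then show "\<exists>v. KR H (Mo x) v \<and> eqv (- Q) Gs k KV KR v VM RM x'" using Suc.IH x'D by blast
    qed
  qed
  have part1: "\<forall>x y n. P x y n \<in> KD \<longrightarrow> eqv (- Q) Gs (Suc k) KV KR (P x y n) VM RM x"
  proof (intro allI impI)
    fix x y n assume PD: "P x y n \<in> KD"
    then have xD: "x \<in> DM" and yD: "y \<in> DN" and e: "eqv V0 Gs n VM RM x VN RN y" by (auto simp: KD_P)
    show "eqv (- Q) Gs (Suc k) KV KR (P x y n) VM RM x"
    proof (simp only: eqv.simps, intro conjI ballI allI impI)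
      fix p assume "p \<in> - Q" then show "KV (P x y n) p = VM x p" by simp
    next
      fix H v assume H: "H \<in> Gs" and R: "KR H (P x y n) v"
      have vD: "v \<in> KD" using K_closed[OF PD R] .
      show "\<exists>x'. RM H x x' \<and> eqv (- Q) Gs k KV KR v VM RM x'"
      proof (cases v)
        case (P x' y' m)
        then have "RM H x x'" using R HB[OF H] by auto
        then show ?thesis using Suc.IH vD P by blast
      next
        case (Mo x')
        then have "RM H x x'" "x' \<in> DM" using R HB[OF H] by auto
        then show ?thesis using Suc.IH Mo by blast
      next
        case (No y')
        then show ?thesis using R HB[OF H] by simp
      qed
    next
      fix H x' assume H: "H \<in> Gs" and Rx: "RM H x x'"
      have x'D: "x' \<in> DM" using lm_closed[OF lmM xD Rx] .
      show "\<exists>v. KR H (P x y n) v \<and> eqv (- Q) Gs k KV KR v VM RM x'"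
      proof (cases n)
        case 0
        then have "KR H (P x y n) (Mo x')" using HB[OF H] x'D Rx by simp
        then show ?thesis using Suc.IH x'D by blast
      next
        case (Suc m)
        have "\<forall>x'. RM H x x' \<longrightarrow> (\<exists>y'. RN H y y' \<and> eqv V0 Gs m VM RM x' VN RN y')"
          using e Suc H by simp
        then obtain y' where Ry: "RN H y y'" and e': "eqv V0 Gs m VM RM x' VN RN y'" using Rx by blast
        have y'D: "y' \<in> DN" using lm_closed[OF lmN yD Ry] .
        have K: "KR H (P x y n) (P x' y' m)" using HB[OF H] Rx Ry x'D y'D e' Suc by simp
        have "P x' y' m \<in> KD" using x'D y'D e' by (simp add: KD_P)
        then show ?thesis using K Suc.IH by blast
      qed
    qed
  qed
  show ?case using part1 part2 by blast
qed

lemma prod_main: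
  assumes x0: "x0 \<in> DM" and y0: "y0 \<in> DN" and e0: "eqv V0 Gs d VM RM x0 VN RN y0"
    and wfa: "wf_fm \<alpha>" and va: "vars \<alpha> \<subseteq> V0 \<union> Q" and da: "dep \<alpha> \<le> d" and sa: "sat VN RN y0 \<alpha>"
    and wfb: "wf_fm \<beta>" and vb: "vars \<beta> \<inter> Q = {}" and ab: "agts \<beta> \<inter> B = {}" and sb: "\<not> sat VM RM x0 \<beta>"
    and der: "derivable L {#\<alpha>#} {#\<beta>#}"
  shows False
proof -
  have uD: "P x0 y0 d \<in> KD" using x0 y0 e0 by (simp add: KD_P)
  have eN: "eqv (V0 \<union> Q) {G. G \<noteq> {}} d KV KR (P x0 y0 d) VN RN y0" using bisim_N uD by blast
  have ga: "grps \<alpha> \<subseteq> {G. G \<noteq> {}}" using wf_grps[OF wfa] by blast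
  have "sat KV KR (P x0 y0 d) \<alpha>" using invariance[OF eN va ga da] sa by simp
  moreover
  have eM: "eqv (- Q) Gs (dep \<beta>) KV KR (P x0 y0 d) VM RM x0" using bisim_M uD by blast
  have gb: "grps \<beta> \<subseteq> Gs" using wf_grps[OF wfb] ab agts_grps[of \<beta>] Gs_def by blast
  have vb': "vars \<beta> \<subseteq> - Q" using vb by blast
  have "\<not> sat KV KR (P x0 y0 d) \<beta>" using invariance[OF eM vb' gb order_refl] sb by simp
  moreover
  have "wfs {#\<alpha>#} {#\<beta>#}" using wfa wfb by (simp add: wfs_def)
  then have "seqsat KV KR (P x0 y0 d) {#\<alpha>#} {#\<beta>#}" using soundness0[OF der K_lmodel] uD by blast
  ultimately show False unfolding seqsat_def by simp
qed

end


section \<open>Uniform interpolation\<close>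

lemma finite_groups: "finite (Gs :: ('agt :: finite) set set)"
  by (rule finite_subset[of _ UNIV]) simp_all

lemma post_exists:
  fixes \<alpha> :: "('p, 'agt :: finite) fm" and Q :: "'p set" and B :: "'agt set"
  assumes wfa: "wf_fm \<alpha>"
  shows "\<exists>I. wf_fm I \<and> vars I \<inter> Q = {} \<and> agts I \<inter> B = {} \<and> derivable L {#\<alpha>#} {#I#} \<and>
            (\<forall>\<beta>. wf_fm \<beta> \<and> vars \<beta> \<inter> Q = {} \<and> agts \<beta> \<inter> B = {} \<and> derivable L {#\<alpha>#} {#\<beta>#} \<longrightarrow>
                 derivable L {#I#} {#\<beta>#})"
proof -
  define V0 where "V0 = vars \<alpha> - Q"
  define Gs :: "'agt set set" where "Gs = {G. G \<noteq> {} \<and> G \<inter> B = {}}"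
  define d where "d = dep \<alpha>"
  define S where "S = (\<lambda>v. chi d V0 Gs Vc (Rc L) v) ` {v \<in> Dc L. sat Vc (Rc L) v \<alpha>}"
  define I where "I = disjs S"
  have fV: "finite V0" unfolding V0_def using finite_vars[of \<alpha>] by simp
  have fG: "finite Gs" by (rule finite_groups)
  have Gne: "\<forall>G\<in>Gs. G \<noteq> {}" unfolding Gs_def by simp
  have SF: "S \<subseteq> FF d V0 Gs" unfolding S_def by (auto intro: chi_FF)
  have fS: "finite S" using finite_subset[OF SF finite_FF[OF fV fG]] .
  have Sp: "\<And>\<phi>. \<phi> \<in> S \<Longrightarrow> wf_fm \<phi> \<and> vars \<phi> \<subseteq> V0 \<and> grps \<phi> \<subseteq> Gs"
    using FF_props[OF fV fG Gne] SF by blast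
  have wfI: "wf_fm I" unfolding I_def using disjs_props(2)[OF fS] Sp by blast
  have "vars I = \<Union> (vars ` S)" unfolding I_def by (rule disjs_props(3)[OF fS])
  then have "vars I \<subseteq> V0" using Sp by auto
  then have vI: "vars I \<inter> Q = {}" unfolding V0_def by auto
  have gI: "grps I \<subseteq> Gs" unfolding I_def using disjs_props(4)[OF fS] Sp by blast
  have aI: "agts I \<inter> B = {}"
  proof (rule equals0I)
    fix a assume "a \<in> agts I \<inter> B"
    then obtain G where G: "G \<in> grps I" "a \<in> G" "a \<in> B" using agts_grps[of I] by auto
    then have "G \<in> Gs" using gI by auto
    then show False using G unfolding Gs_def by auto
  qed
  have dI: "derivable L {#\<alpha>#} {#I#}"
  proof (subst canon_equiv[OF wfa wfI], intro ballI impI)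
    fix w assume wD: "w \<in> Dc L" and sw: "sat Vc (Rc L) w \<alpha>"
    have "chi d V0 Gs Vc (Rc L) w \<in> S" unfolding S_def by (rule imageI) (simp add: wD sw)
    moreover have "sat Vc (Rc L) w (chi d V0 Gs Vc (Rc L) w)"
      by (simp add: chi_correct[OF fV fG] eqv_refl)
    ultimately have "\<exists>\<phi>\<in>S. sat Vc (Rc L) w \<phi>" by (rule bexI[rotated])
    then show "sat Vc (Rc L) w I" unfolding I_def disjs_props(1)[OF fS] .
  qed
  have pI: "\<forall>\<beta>. wf_fm \<beta> \<and> vars \<beta> \<inter> Q = {} \<and> agts \<beta> \<inter> B = {} \<and> derivable L {#\<alpha>#} {#\<beta>#} \<longrightarrow>
                 derivable L {#I#} {#\<beta>#}"
  proof (intro allI impI)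
    fix \<beta> :: "('p, 'agt) fm"
    assume h: "wf_fm \<beta> \<and> vars \<beta> \<inter> Q = {} \<and> agts \<beta> \<inter> B = {} \<and> derivable L {#\<alpha>#} {#\<beta>#}"
    then have wfb: "wf_fm \<beta>" and vb: "vars \<beta> \<inter> Q = {}" and ab: "agts \<beta> \<inter> B = {}"
      and der: "derivable L {#\<alpha>#} {#\<beta>#}" by blast+
    show "derivable L {#I#} {#\<beta>#}"
    proof (subst canon_equiv[OF wfI wfb], intro ballI impI)
      fix w assume wD: "w \<in> Dc L" and sw: "sat Vc (Rc L) w I"
      have "\<exists>\<phi>\<in>S. sat Vc (Rc L) w \<phi>" using sw unfolding I_def disjs_props(1)[OF fS] .
      then obtain \<phi> where phiS: "\<phi> \<in> S" and sphi: "sat Vc (Rc L) w \<phi>" by (rule bexE)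
      from phiS obtain v where phv: "\<phi> = chi d V0 Gs Vc (Rc L) v" and vin: "v \<in> {v \<in> Dc L. sat Vc (Rc L) v \<alpha>}"
        unfolding S_def by (rule imageE)
      have vD: "v \<in> Dc L" and sv: "sat Vc (Rc L) v \<alpha>" using vin by simp_all
      have sc: "sat Vc (Rc L) w (chi d V0 Gs Vc (Rc L) v)" using sphi phv by simp
      have "eqv V0 Gs d Vc (Rc L) v Vc (Rc L) w" using sc by (simp add: chi_correct[OF fV fG])
      then have e: "eqv V0 Gs d Vc (Rc L) w Vc (Rc L) v" by (rule eqv_sym)
      interpret pm: prodm L "Dc L" "Rc L" Vc "Dc L" "Rc L" Vc V0 Q B Gs
        by unfold_locales (simp_all add: Gs_def canon_lmodel)
      show "sat Vc (Rc L) w \<beta>"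
      proof (rule ccontr)
        assume nb: "\<not> sat Vc (Rc L) w \<beta>"
        have va: "vars \<alpha> \<subseteq> V0 \<union> Q" unfolding V0_def by blast
        have da: "dep \<alpha> \<le> d" unfolding d_def by simp
        show False by (rule pm.prod_main[OF wD vD e wfa va da sv wfb vb ab nb der])
      qed
    qed
  qed
  show ?thesis by (intro exI[of _ I] conjI wfI vI aI dI pI)
qed

theorem corollary6p21:
  fixes L :: logic
    and \<alpha> :: "('p :: countable, 'agt :: finite) fm"
    and Q :: "'p set" and B :: "'agt set"
  assumes "wf_fm \<alpha>" and "finite Q" and "Q \<subseteq> vars \<alpha>"
    and "finite B" and "B \<subseteq> agts \<alpha>"
  shows "(\<exists>I. wf_fm I \<and> vars I \<inter> Q = {} \<and> agts I \<inter> B = {}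
              \<and> derivable L {#I#} {#\<alpha>#}
              \<and> (\<forall>\<beta>. wf_fm \<beta> \<and> vars \<beta> \<inter> Q = {} \<and> agts \<beta> \<inter> B = {}
                     \<and> derivable L {#\<beta>#} {#\<alpha>#} \<longrightarrow> derivable L {#\<beta>#} {#I#}))
       \<and> (\<exists>I. wf_fm I \<and> vars I \<inter> Q = {} \<and> agts I \<inter> B = {}
              \<and> derivable L {#\<alpha>#} {#I#}
              \<and> (\<forall>\<beta>. wf_fm \<beta> \<and> vars \<beta> \<inter> Q = {} \<and> agts \<beta> \<inter> B = {}
                     \<and> derivable L {#\<alpha>#} {#\<beta>#} \<longrightarrow> derivable L {#I#} {#\<beta>#}))"
proof (rule conjI)
  have wfa: "wf_fm \<alpha>" by (rule assms(1))
  show "\<exists>I. wf_fm I \<and> vars I \<inter> Q = {} \<and> agts I \<inter> B = {}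
              \<and> derivable L {#\<alpha>#} {#I#}
              \<and> (\<forall>\<beta>. wf_fm \<beta> \<and> vars \<beta> \<inter> Q = {} \<and> agts \<beta> \<inter> B = {}
                     \<and> derivable L {#\<alpha>#} {#\<beta>#} \<longrightarrow> derivable L {#I#} {#\<beta>#})"
    by (rule post_exists[OF wfa])
  have wfna: "wf_fm (Neg \<alpha>)" using wfa by simp
  obtain J where J: "wf_fm J \<and> vars J \<inter> Q = {} \<and> agts J \<inter> B = {} \<and> derivable L {#Neg \<alpha>#} {#J#} \<and>
      (\<forall>\<beta>. wf_fm \<beta> \<and> vars \<beta> \<inter> Q = {} \<and> agts \<beta> \<inter> B = {} \<and> derivable L {#Neg \<alpha>#} {#\<beta>#} \<longrightarrow>
                 derivable L {#J#} {#\<beta>#})"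
    using post_exists[OF wfna, of Q B L] by (rule exE)
  have wfJ: "wf_fm J" using J by (rule conjunct1)
  have vJ: "vars J \<inter> Q = {}" using J[THEN conjunct2] by (rule conjunct1)
  have aJ: "agts J \<inter> B = {}" using J[THEN conjunct2, THEN conjunct2] by (rule conjunct1)
  have dJ: "derivable L {#Neg \<alpha>#} {#J#}" using J[THEN conjunct2, THEN conjunct2, THEN conjunct2] by (rule conjunct1)
  have pJ: "\<forall>\<beta>. wf_fm \<beta> \<and> vars \<beta> \<inter> Q = {} \<and> agts \<beta> \<inter> B = {} \<and> derivable L {#Neg \<alpha>#} {#\<beta>#} \<longrightarrow>
                 derivable L {#J#} {#\<beta>#}" using J[THEN conjunct2, THEN conjunct2, THEN conjunct2] by (rule conjunct2)
  have wfnJ: "wf_fm (Neg J)" using wfJ by simp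
  have sJ: "\<forall>w\<in>Dc L. sat Vc (Rc L) w (Neg \<alpha>) \<longrightarrow> sat Vc (Rc L) w J"
    using dJ unfolding canon_equiv[OF wfna wfJ] .
  have d1: "derivable L {#Neg J#} {#\<alpha>#}"
    unfolding canon_equiv[OF wfnJ wfa]
  proof (intro ballI impI)
    fix w assume wD: "w \<in> Dc L" and s: "sat Vc (Rc L) w (Neg J)"
    show "sat Vc (Rc L) w \<alpha>"
    proof (rule ccontr)
      assume "\<not> sat Vc (Rc L) w \<alpha>"
      then have "sat Vc (Rc L) w (Neg \<alpha>)" by simp
      then have "sat Vc (Rc L) w J" using sJ wD by blast
      then show False using s by simp
    qed
  qed
  have p1: "\<forall>\<beta>. wf_fm \<beta> \<and> vars \<beta> \<inter> Q = {} \<and> agts \<beta> \<inter> B = {}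
                     \<and> derivable L {#\<beta>#} {#\<alpha>#} \<longrightarrow> derivable L {#\<beta>#} {#Neg J#}"
  proof (intro allI impI)
    fix \<beta> :: "('p, 'agt) fm"
    assume h: "wf_fm \<beta> \<and> vars \<beta> \<inter> Q = {} \<and> agts \<beta> \<inter> B = {} \<and> derivable L {#\<beta>#} {#\<alpha>#}"
    have wfb: "wf_fm \<beta>" using h by (rule conjunct1)
    have vb: "vars \<beta> \<inter> Q = {}" using h[THEN conjunct2] by (rule conjunct1)
    have ab: "agts \<beta> \<inter> B = {}" using h[THEN conjunct2, THEN conjunct2] by (rule conjunct1)
    have der: "derivable L {#\<beta>#} {#\<alpha>#}" using h[THEN conjunct2, THEN conjunct2] by (rule conjunct2)
    have wfnb: "wf_fm (Neg \<beta>)" using wfb by simp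
    have s1: "\<forall>w\<in>Dc L. sat Vc (Rc L) w \<beta> \<longrightarrow> sat Vc (Rc L) w \<alpha>"
      using der unfolding canon_equiv[OF wfb wfa] .
    have "derivable L {#Neg \<alpha>#} {#Neg \<beta>#}"
      unfolding canon_equiv[OF wfna wfnb]
    proof (intro ballI impI)
      fix w assume wD: "w \<in> Dc L" and s: "sat Vc (Rc L) w (Neg \<alpha>)"
      show "sat Vc (Rc L) w (Neg \<beta>)"
      proof (rule ccontr)
        assume "\<not> sat Vc (Rc L) w (Neg \<beta>)"
        then have "sat Vc (Rc L) w \<beta>" by simp
        then have "sat Vc (Rc L) w \<alpha>" using s1 wD by blast
        then show False using s by simp
      qed
    qed
    moreover have "vars (Neg \<beta>) \<inter> Q = {}" "agts (Neg \<beta>) \<inter> B = {}" using vb ab by simp_all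
    ultimately have "derivable L {#J#} {#Neg \<beta>#}" using pJ wfnb by blast
    then have s2: "\<forall>w\<in>Dc L. sat Vc (Rc L) w J \<longrightarrow> sat Vc (Rc L) w (Neg \<beta>)"
      unfolding canon_equiv[OF wfJ wfnb] .
    show "derivable L {#\<beta>#} {#Neg J#}"
      unfolding canon_equiv[OF wfb wfnJ]
    proof (intro ballI impI)
      fix w assume wD: "w \<in> Dc L" and s: "sat Vc (Rc L) w \<beta>"
      show "sat Vc (Rc L) w (Neg J)"
      proof (rule ccontr)
        assume "\<not> sat Vc (Rc L) w (Neg J)"
        then have "sat Vc (Rc L) w J" by simp
        then have "sat Vc (Rc L) w (Neg \<beta>)" using s2 wD by blast
        then show False using s by simp
      qed
    qed
  qed
  have vnJ: "vars (Neg J) \<inter> Q = {}" and anJ: "agts (Neg J) \<inter> B = {}" using vJ aJ by simp_all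
  show "\<exists>I. wf_fm I \<and> vars I \<inter> Q = {} \<and> agts I \<inter> B = {}
              \<and> derivable L {#I#} {#\<alpha>#}
              \<and> (\<forall>\<beta>. wf_fm \<beta> \<and> vars \<beta> \<inter> Q = {} \<and> agts \<beta> \<inter> B = {}
                     \<and> derivable L {#\<beta>#} {#\<alpha>#} \<longrightarrow> derivable L {#\<beta>#} {#I#})"
    by (intro exI[of _ "Neg J"] conjI wfnJ vnJ anJ d1 p1)
qed

end
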